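(* Let $\rho,A,E,I,\ell,I_1,I_2,I_3,\varkappa>0$, $\ell_0\ge 0$, $\omega_0\in\mathbb{R}$, and let $\nu_1,\nu_2,\nu_3>0$ be constant gains. Consider the abstract closed-loop system $\dot{\boldsymbol\xi}(t)=F\boldsymbol\xi(t)$ on the Hilbert space $X$ with the nonlinear operator $F:D(F)\to X$ described in the context, and assume (Assumption A1) that the Cauchy problem $\dot{\boldsymbol\xi}=F\boldsymbol\xi$, $\boldsymbol\xi(0)=\boldsymbol\xi_0$, is well-posed on $[0,+\infty)$. Then the equilibrium $$\hat{\boldsymbol\xi}=(0,0,\;0,0,\;-\omega_0,0,0,\;0,0,0,1)^T\in X$$ is stable with respect to the functional $$y(\boldsymbol\xi)=\|w_1\|_{H^2(0,\ell)}+\|w_2\|_{H^2(0,\ell)}+\|v_1\|_{L^2(0,\ell)}+\|v_2\|_{L^2(0,\ell)},$$ that is: for every $\varepsilon>0$ there exists $\delta(\varepsilon)>0$ such that every solution $\boldsymbol\xi(\cdot)$ of $\dot{\boldsymbol\xi}=F\boldsymbol\xi$ on $[0,\infty)$ with $\|\boldsymbol\xi(0)-\hat{\boldsymbol\xi}\|_X<\delta(\varepsilon)$ satisfies $y(\boldsymbol\xi(t))<\varepsilon$ for all $t\ge0$.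
   Context: State space: $X$ is the real Hilbert space of tuples $\boldsymbol\xi=(w_1,v_1,w_2,v_2,\omega_1,\omega_2,\omega_3,q_1,q_2,q_3,q_4)^T$ with $w_1,w_2\in H^2(0,\ell)$, $v_1,v_2\in L^2(0,\ell)$, $\omega_i,q_j\in\mathbb{R}$, and $w_1(0)=w_2(0)=0$, $w_1'(0)=w_2'(0)=0$ (prime = derivative in $\zeta\in[0,\ell]$), with inner product $$\langle\boldsymbol\xi,\bar{\boldsymbol\xi}\rangle_X=\int_0^\ell\Big(\rho A(v_1\bar v_1+v_2\bar v_2)+EI(w_1''\bar w_1''+w_2''\bar w_2'')\Big)d\zeta+\sum_{i=1}^3 I_i\omega_i\bar\omega_i+\varkappa\sum_{j=1}^4 q_j\bar q_j.$$ Functionals: $\gamma_1(v_2)=\int_0^\ell(\zeta+\ell_0)v_2\,d\zeta$, $\gamma_2(v_1)=-\int_0^\ell(\zeta+\ell_0)v_1\,d\zeta$, $\gamma_3(w_1,w_2,v_1,v_2)=\int_0^\ell(w_2v_1-w_1v_2)\,d\zeta$. Domain: $D(F)=\{\boldsymbol\xi\in X: w_j\in H^4(0,\ell),\ w_j(0)=w_j'(0)=0,\ w_j''(\ell)=w_j'''(\ell)=0,\ v_j\in H^2(0,\ell),\ v_j(0)=v_j'(0)=0,\ j=1,2\}$. Operator: $F\boldsymbol\xi$ has components, in order, $v_1$; $-\frac{EI}{\rho A}w_1^{(4)}+2\omega_3v_2+\nu_2(\zeta+\ell_0)\gamma_2(v_1)-\nu_3w_2\gamma_3$; $v_2$; $-\frac{EI}{\rho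 A}w_2^{(4)}-2\omega_3v_1-\nu_1(\zeta+\ell_0)\gamma_1(v_2)+\nu_3w_1\gamma_3$; $\omega_2\omega_3-\nu_1\gamma_1(v_2)$; $-\omega_1\omega_3-\nu_2\gamma_2(v_1)$; $-\nu_3\gamma_3$; $\tfrac12(\omega_3q_2-\omega_2q_3+(\omega_1+\omega_0)q_4)$; $\tfrac12((\omega_1-\omega_0)q_3-\omega_3q_1+\omega_2q_4)$; $\tfrac12(\omega_2q_1-(\omega_1-\omega_0)q_2+\omega_3q_4)$; $-\tfrac12(q_1(\omega_1+\omega_0)+q_2\omega_2+q_3\omega_3)$, where $\gamma_3=\gamma_3(w_1,w_2,v_1,v_2)$ and $w^{(4)}$ is the fourth $\zeta$-derivative. A solution on $[0,\infty)$ means a continuously differentiable map $\boldsymbol\xi:[0,\infty)\to X$ with $\boldsymbol\xi(t)\in D(F)$ and $\dot{\boldsymbol\xi}(t)=F\boldsymbol\xi(t)$ for all $t\ge0$; well-posedness (Assumption A1) means that for each initial datum $\boldsymbol\xi_0$ the Cauchy problem has a unique such solution defined on all of $[0,\infty)$. (This system models a satellite with rigid carrier of principal moments $I_1,I_2,I_3$, orbital rate $\omega_0$, and an Euler–Bernoulli cantilever boom of length $\ell$ attached at distance $\ell_0$, under the feedback control of the paper.) *)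

theory Defs
  imports "HOL-Analysis.Analysis"
begin

record params =
  p_rho :: real
  p_A :: real
  p_E :: real
  p_I :: real
  p_ell :: real
  p_ell0 :: real
  p_I1 :: real
  p_I2 :: real
  p_I3 :: real
  p_kappa :: real
  p_om0 :: real
  p_nu1 :: real
  p_nu2 :: real
  p_nu3 :: real

definition L2 :: "real \<Rightarrow> (real \<Rightarrow> real) \<Rightarrow> bool" where
  "L2 l f \<longleftrightarrow> f measurable_on {0..l} \<and> (\<lambda>x. (f x)^2) integrable_on {0..l}"

text \<open>ds is a chain of Sobolev derivatives of order k of f on [0,l]:
  ds 0 = f, every ds j (j<k) is the indefinite integral of ds (j+1) on [0,l]
  (hence absolutely continuous), and all ds j (j \<le> k) are in L2.\<close>
definition sobolev_derivs :: "real \<Rightarrow> nat \<Rightarrow> (real \<Rightarrow> real) \<Rightarrow> (nat \<Rightarrow> real \<Rightarrow> real) \<Rightarrow> bool" where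
  "sobolev_derivs l k f ds \<longleftrightarrow> ds 0 = f \<and> (\<forall>j\<le>k. L2 l (ds j)) \<and>
     (\<forall>j<k. \<forall>x\<in>{0..l}. ds j x = ds j 0 + integral {0..x} (ds (Suc j)))"

text \<open>f belongs to H^k(0,l) (f being its continuous representative).\<close>
definition in_H :: "nat \<Rightarrow> real \<Rightarrow> (real \<Rightarrow> real) \<Rightarrow> bool" where
  "in_H k l f \<longleftrightarrow> (\<exists>ds. sobolev_derivs l k f ds)"

text \<open>The j-th (weak) derivative of an H^k function: unique pointwise on [0,l] for j<k,
  unique almost everywhere for j = k.\<close>
definition sd :: "real \<Rightarrow> nat \<Rightarrow> (real \<Rightarrow> real) \<Rightarrow> nat \<Rightarrow> real \<Rightarrow> real" where
  "sd l k f = (SOME ds. sobolev_derivs l k f ds)"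

definition L2_norm :: "real \<Rightarrow> (real \<Rightarrow> real) \<Rightarrow> real" where
  "L2_norm l f = sqrt (integral {0..l} (\<lambda>x. (f x)^2))"

definition H2_norm :: "real \<Rightarrow> (real \<Rightarrow> real) \<Rightarrow> real" where
  "H2_norm l f = sqrt (integral {0..l} (\<lambda>x. (f x)^2 + (sd l 2 f 1 x)^2 + (sd l 2 f 2 x)^2))"

record state =
  w1 :: "real \<Rightarrow> real"
  v1 :: "real \<Rightarrow> real"
  w2 :: "real \<Rightarrow> real"
  v2 :: "real \<Rightarrow> real"
  om1 :: real
  om2 :: real
  om3 :: real
  q1 :: real
  q2 :: real
  q3 :: real
  q4 :: real

definition st_diff :: "state \<Rightarrow> state \<Rightarrow> state" where
  "st_diff a b = \<lparr> w1 = (\<lambda>z. w1 a z - w1 b z), v1 = (\<lambda>z. v1 a z - v1 b z),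
     w2 = (\<lambda>z. w2 a z - w2 b z), v2 = (\<lambda>z. v2 a z - v2 b z),
     om1 = om1 a - om1 b, om2 = om2 a - om2 b, om3 = om3 a - om3 b,
     q1 = q1 a - q1 b, q2 = q2 a - q2 b, q3 = q3 a - q3 b, q4 = q4 a - q4 b \<rparr>"

definition st_scale :: "real \<Rightarrow> state \<Rightarrow> state" where
  "st_scale c a = \<lparr> w1 = (\<lambda>z. c * w1 a z), v1 = (\<lambda>z. c * v1 a z),
     w2 = (\<lambda>z. c * w2 a z), v2 = (\<lambda>z. c * v2 a z),
     om1 = c * om1 a, om2 = c * om2 a, om3 = c * om3 a,
     q1 = c * q1 a, q2 = c * q2 a, q3 = c * q3 a, q4 = c * q4 a \<rparr>"

definition in_X :: "params \<Rightarrow> state \<Rightarrow> bool" where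
  "in_X P s \<longleftrightarrow> (let l = p_ell P in
     in_H 2 l (w1 s) \<and> in_H 2 l (w2 s) \<and> L2 l (v1 s) \<and> L2 l (v2 s) \<and>
     w1 s 0 = 0 \<and> w2 s 0 = 0 \<and> sd l 2 (w1 s) 1 0 = 0 \<and> sd l 2 (w2 s) 1 0 = 0)"

definition X_norm :: "params \<Rightarrow> state \<Rightarrow> real" where
  "X_norm P s = (let l = p_ell P in sqrt (
     integral {0..l} (\<lambda>z. p_rho P * p_A P * ((v1 s z)^2 + (v2 s z)^2)
        + p_E P * p_I P * ((sd l 2 (w1 s) 2 z)^2 + (sd l 2 (w2 s) 2 z)^2))
     + p_I1 P * (om1 s)^2 + p_I2 P * (om2 s)^2 + p_I3 P * (om3 s)^2
     + p_kappa P * ((q1 s)^2 + (q2 s)^2 + (q3 s)^2 + (q4 s)^2)))"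

definition in_DF :: "params \<Rightarrow> state \<Rightarrow> bool" where
  "in_DF P s \<longleftrightarrow> in_X P s \<and> (let l = p_ell P in
     in_H 4 l (w1 s) \<and> in_H 4 l (w2 s) \<and>
     w1 s 0 = 0 \<and> w2 s 0 = 0 \<and> sd l 4 (w1 s) 1 0 = 0 \<and> sd l 4 (w2 s) 1 0 = 0 \<and>
     sd l 4 (w1 s) 2 l = 0 \<and> sd l 4 (w1 s) 3 l = 0 \<and>
     sd l 4 (w2 s) 2 l = 0 \<and> sd l 4 (w2 s) 3 l = 0 \<and>
     in_H 2 l (v1 s) \<and> in_H 2 l (v2 s) \<and>
     v1 s 0 = 0 \<and> v2 s 0 = 0 \<and> sd l 2 (v1 s) 1 0 = 0 \<and> sd l 2 (v2 s) 1 0 = 0)"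

definition gamma1 :: "params \<Rightarrow> state \<Rightarrow> real" where
  "gamma1 P s = integral {0..p_ell P} (\<lambda>z. (z + p_ell0 P) * v2 s z)"

definition gamma2 :: "params \<Rightarrow> state \<Rightarrow> real" where
  "gamma2 P s = - integral {0..p_ell P} (\<lambda>z. (z + p_ell0 P) * v1 s z)"

definition gamma3 :: "params \<Rightarrow> state \<Rightarrow> real" where
  "gamma3 P s = integral {0..p_ell P} (\<lambda>z. w2 s z * v1 s z - w1 s z * v2 s z)"

definition Fop :: "params \<Rightarrow> state \<Rightarrow> state" where
  "Fop P s = (let l = p_ell P; c = p_E P * p_I P / (p_rho P * p_A P);
      g1 = gamma1 P s; g2 = gamma2 P s; g3 = gamma3 P s; w0 = p_om0 P in
   \<lparr> w1 = v1 s,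
     v1 = (\<lambda>z. - c * sd l 4 (w1 s) 4 z + 2 * om3 s * v2 s z
             + p_nu2 P * (z + p_ell0 P) * g2 - p_nu3 P * w2 s z * g3),
     w2 = v2 s,
     v2 = (\<lambda>z. - c * sd l 4 (w2 s) 4 z - 2 * om3 s * v1 s z
             - p_nu1 P * (z + p_ell0 P) * g1 + p_nu3 P * w1 s z * g3),
     om1 = om2 s * om3 s - p_nu1 P * g1,
     om2 = - om1 s * om3 s - p_nu2 P * g2,
     om3 = - p_nu3 P * g3,
     q1 = (1/2) * (om3 s * q2 s - om2 s * q3 s + (om1 s + w0) * q4 s),
     q2 = (1/2) * ((om1 s - w0) * q3 s - om3 s * q1 s + om2 s * q4 s),
     q3 = (1/2) * (om2 s * q1 s - (om1 s - w0) * q2 s + om3 s * q4 s),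
     q4 = - (1/2) * (q1 s * (om1 s + w0) + q2 s * om2 s + q3 s * om3 s) \<rparr>)"

definition is_solution :: "params \<Rightarrow> (real \<Rightarrow> state) \<Rightarrow> bool" where
  "is_solution P xi \<longleftrightarrow>
     (\<forall>t\<ge>0. in_DF P (xi t)) \<and>
     (\<forall>t\<ge>0. ((\<lambda>s. X_norm P (st_diff (st_scale (1 / (s - t)) (st_diff (xi s) (xi t)))
                                      (Fop P (xi t)))) \<longlongrightarrow> 0) (at t within {0..})) \<and>
     (\<forall>t\<ge>0. ((\<lambda>s. X_norm P (st_diff (Fop P (xi s)) (Fop P (xi t)))) \<longlongrightarrow> 0)
                (at t within {0..}))"

text \<open>Assumption A1: for each initial datum in D(F) there is a unique solution on
  [0,\<infinity>) (uniqueness as elements of X, i.e. up to X-norm zero).\<close>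
definition well_posed :: "params \<Rightarrow> bool" where
  "well_posed P \<longleftrightarrow> (\<forall>x0. in_DF P x0 \<longrightarrow>
     (\<exists>xi. is_solution P xi \<and> xi 0 = x0) \<and>
     (\<forall>xi eta. is_solution P xi \<and> is_solution P eta \<and> X_norm P (st_diff (xi 0) x0) = 0
        \<and> X_norm P (st_diff (eta 0) x0) = 0 \<longrightarrow> (\<forall>t\<ge>0. X_norm P (st_diff (xi t) (eta t)) = 0)))"

definition xi_hat :: "params \<Rightarrow> state" where
  "xi_hat P = \<lparr> w1 = (\<lambda>z. 0), v1 = (\<lambda>z. 0), w2 = (\<lambda>z. 0), v2 = (\<lambda>z. 0),
     om1 = - p_om0 P, om2 = 0, om3 = 0, q1 = 0, q2 = 0, q3 = 0, q4 = 1 \<rparr>"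

definition y_out :: "params \<Rightarrow> state \<Rightarrow> real" where
  "y_out P s = H2_norm (p_ell P) (w1 s) + H2_norm (p_ell P) (w2 s)
     + L2_norm (p_ell P) (v1 s) + L2_norm (p_ell P) (v2 s)"

end

theory Submission
  imports Defs
begin

lemma meas_bound_int:
  fixes f g :: "real \<Rightarrow> real"
  assumes "f measurable_on {a..b}" "g integrable_on {a..b}" "\<And>x. x \<in> {a..b} \<Longrightarrow> \<bar>f x\<bar> \<le> g x"
  shows "f integrable_on {a..b}"
proof (rule measurable_bounded_by_integrable_imp_integrable[OF _ assms(2)])
  show "f \<in> borel_measurable (lebesgue_on {a..b})"
    using measurable_on_iff_borel_measurable[of "{a..b}" f] assms(1) by simp
  show "norm (f x) \<le> g x" if "x \<in> {a..b}" for x using assms(3)[OF that] by simp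
  show "{a..b} \<in> sets lebesgue" by simp
qed

lemma meas_bound_absint:
  fixes f g :: "real \<Rightarrow> real"
  assumes "f measurable_on {a..b}" "g integrable_on {a..b}" "\<And>x. x \<in> {a..b} \<Longrightarrow> \<bar>f x\<bar> \<le> g x"
  shows "f absolutely_integrable_on {a..b}"
proof -
  have "(\<lambda>x. \<bar>f x\<bar>) measurable_on {a..b}"
    using measurable_on_compose_continuous_0[of f "{a..b}" "\<lambda>x. \<bar>x\<bar>::real"] assms(1)
    by (simp add: o_def continuous_intros)
  then have "(\<lambda>x. \<bar>f x\<bar>) integrable_on {a..b}"
    using meas_bound_int[OF _ assms(2)] assms(3) by simp
  then show ?thesis
    using abs_absolutely_integrableI_1 meas_bound_int[OF assms] by blast
qed

lemma int_cmul: "f integrable_on S \<Longrightarrow> (\<lambda>x. c * f x :: real) integrable_on S"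
  using integrable_cmul[of f S c] by simp

lemma int_cdiv: "f integrable_on S \<Longrightarrow> (\<lambda>x. f x / c :: real) integrable_on S"
  using int_cmul[of f S "1/c"] by simp

lemma measurable_on_mult:
  fixes f g :: "real \<Rightarrow> real"
  assumes "f measurable_on S" "g measurable_on S"
  shows "(\<lambda>x. f x * g x) measurable_on S"
  using measurable_on_bilinear[OF bilinear_times assms] by simp

lemma L2_meas: "L2 l f \<Longrightarrow> f measurable_on {0..l}"
  by (simp add: L2_def)

lemma L2_sq: "L2 l f \<Longrightarrow> (\<lambda>x. (f x)^2) integrable_on {0..l}"
  by (simp add: L2_def)

lemma L2_prod_absint:
  assumes "L2 l f" "L2 l g"
  shows "(\<lambda>x. f x * g x) absolutely_integrable_on {0..l}"
proof (rule meas_bound_absint)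
  show "(\<lambda>x. f x * g x) measurable_on {0..l}"
    using assms by (intro measurable_on_mult) (auto simp: L2_def)
  show "(\<lambda>x. ((f x)^2 + (g x)^2)/2) integrable_on {0..l}"
    using assms by (intro int_cdiv integrable_add) (auto simp: L2_def)
  show "\<bar>f x * g x\<bar> \<le> ((f x)^2 + (g x)^2)/2" for x
  proof -
    have "0 \<le> (\<bar>f x\<bar> - \<bar>g x\<bar>)^2" by simp
    then show ?thesis by (simp add: power2_eq_square abs_mult algebra_simps)
  qed
qed

lemma L2_prod_int: "L2 l f \<Longrightarrow> L2 l g \<Longrightarrow> (\<lambda>x. f x * g x) integrable_on {0..l}"
  using L2_prod_absint absolutely_integrable_on_def by blast

lemma L2_const: "L2 l (\<lambda>x. c)"
proof -
  have "(\<lambda>x. c) measurable_on {0..l}" by (simp)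
  moreover have "(\<lambda>x. c^2) integrable_on {0..l}" by (intro integrable_continuous_interval continuous_intros)
  ultimately show ?thesis by (simp add: L2_def)
qed

lemma L2_int:
  assumes "L2 l f" shows "f absolutely_integrable_on {0..l}"
proof -
  have "(\<lambda>x. f x * 1) absolutely_integrable_on {0..l}"
    using L2_prod_absint[OF assms L2_const] .
  then show ?thesis by simp
qed

lemma L2_int': "L2 l f \<Longrightarrow> f integrable_on {0..l}"
  using L2_int absolutely_integrable_on_def by blast

lemma L2_add:
  assumes "L2 l f" "L2 l g"
  shows "L2 l (\<lambda>x. f x + g x)"
proof -
  have m: "(\<lambda>x. f x + g x) measurable_on {0..l}"
    using assms by (intro measurable_on_add) (auto simp: L2_def)
  have "(\<lambda>x. (f x + g x)^2) integrable_on {0..l}"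
  proof -
    have "(\<lambda>x. (f x)^2 + 2 * (f x * g x) + (g x)^2) integrable_on {0..l}"
      using assms L2_prod_int[OF assms]
      by (intro integrable_add int_cmul) (auto simp: L2_def)
    moreover have "\<And>x. (f x + g x)^2 = (f x)^2 + 2*(f x * g x) + (g x)^2" by (simp add: power2_sum)
    ultimately show ?thesis by simp
  qed
  with m show ?thesis by (simp add: L2_def)
qed

lemma L2_cmul:
  assumes "L2 l f"
  shows "L2 l (\<lambda>x. c * f x)"
proof -
  have m: "(\<lambda>x. c * f x) measurable_on {0..l}"
    using assms measurable_on_cmul by (auto simp: L2_def)
  have "(\<lambda>x. c^2 * (f x)^2) integrable_on {0..l}"
    using assms by (intro int_cmul) (auto simp: L2_def)
  then show ?thesis using m by (simp add: L2_def power_mult_distrib)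
qed

lemma L2_neg: "L2 l f \<Longrightarrow> L2 l (\<lambda>x. - f x)"
  using L2_cmul[of l f "-1"] by simp

lemma L2_diff: "L2 l f \<Longrightarrow> L2 l g \<Longrightarrow> L2 l (\<lambda>x. f x - g x)"
  using L2_add[OF _ L2_neg[of l g]] by simp

lemma L2_cont: 
  assumes "continuous_on {0..l} f" shows "L2 l f"
proof -
  have "f measurable_on {0..l}"
    using assms continuous_imp_measurable_on_sets_lebesgue[of "{0..l}"] measurable_on_iff_borel_measurable[of "{0..l}"]
    by auto
  moreover have "(\<lambda>x. (f x)^2) integrable_on {0..l}"
    using assms by (intro integrable_continuous_interval continuous_intros)
  ultimately show ?thesis by (simp add: L2_def)
qed

lemma L2_mult_cont:
  assumes "continuous_on {0..l} p" "L2 l f"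
  shows "L2 l (\<lambda>x. p x * f x)"
proof -
  obtain M where M: "\<And>x. x \<in> {0..l} \<Longrightarrow> \<bar>p x\<bar> \<le> M"
    using compact_continuous_image[OF assms(1) compact_Icc] 
    unfolding compact_eq_bounded_closed bounded_iff by (metis image_eqI real_norm_def)
  have mp: "p measurable_on {0..l}"
    using assms continuous_imp_measurable_on_sets_lebesgue[of "{0..l}"] measurable_on_iff_borel_measurable[of "{0..l}"]
    by auto
  have m: "(\<lambda>x. p x * f x) measurable_on {0..l}"
    using assms mp by (intro measurable_on_mult) (auto simp: L2_def)
  have "(\<lambda>x. (p x * f x)^2) integrable_on {0..l}"
  proof (rule meas_bound_int)
    show "(\<lambda>x. (p x * f x)\<^sup>2) measurable_on {0..l}"
      using m measurable_on_mult[OF m m] by (simp add: power2_eq_square)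
    show "(\<lambda>x. M^2 * (f x)^2) integrable_on {0..l}"
      using assms by (intro int_cmul) (auto simp: L2_def)
    fix x assume x: "x \<in> {0..l}"
    have "\<bar>p x\<bar>^2 \<le> M^2" using M[OF x] by (meson abs_ge_zero power_mono)
    then show "\<bar>(p x * f x)\<^sup>2\<bar> \<le> M^2 * (f x)^2"
      by (simp add: power_mult_distrib mult_right_mono)
  qed
  with m show ?thesis by (simp add: L2_def)
qed

lemma Icc_not_bot: "(0::real) < l \<Longrightarrow> x \<in> {0..l} \<Longrightarrow> at x within {0..l} \<noteq> bot"
  by (auto simp: trivial_limit_within intro!: islimpt_closure_open[where s="{0<..<l}"])

lemma int_sub: "(f::real\<Rightarrow>real) integrable_on {0..l} \<Longrightarrow> x \<in> {0..l} \<Longrightarrow> f integrable_on {0..x::real}"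
  by (erule integrable_subinterval_real) auto

lemma chain_L2: "sobolev_derivs l k f ds \<Longrightarrow> j \<le> k \<Longrightarrow> L2 l (ds j)"
  unfolding sobolev_derivs_def by blast

lemma chain_0: "sobolev_derivs l k f ds \<Longrightarrow> ds 0 = f"
  unfolding sobolev_derivs_def by blast

lemma chain_eq: "sobolev_derivs l k f ds \<Longrightarrow> j < k \<Longrightarrow> x \<in> {0..l} \<Longrightarrow>
   ds j x = ds j 0 + integral {0..x} (ds (Suc j))"
  unfolding sobolev_derivs_def by blast

lemma chain_int: "sobolev_derivs l k f ds \<Longrightarrow> j \<le> k \<Longrightarrow> ds j integrable_on {0..l}"
  using chain_L2 L2_int' by blast

lemma chain_cont:
  assumes "sobolev_derivs l k f ds" "j < k"
  shows "continuous_on {0..l} (ds j)"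
proof -
  have "continuous_on {0..l} (\<lambda>x. integral {0..x} (ds (Suc j)))"
    using chain_int[OF assms(1), of "Suc j"] assms(2) indefinite_integral_continuous_1 by simp
  then have "continuous_on {0..l} (\<lambda>x. ds j 0 + integral {0..x} (ds (Suc j)))"
    by (intro continuous_intros)
  then show ?thesis
    by (rule continuous_on_eq) (metis chain_eq[OF assms])
qed

lemma chain_deriv:
  assumes "sobolev_derivs l k f ds" "Suc j < k" "x \<in> {0..l}"
  shows "(ds j has_real_derivative ds (Suc j) x) (at x within {0..l})"
proof -
  have "((\<lambda>x. integral {0..x} (ds (Suc j))) has_real_derivative ds (Suc j) x) (at x within {0..l})"
    by (rule integral_has_real_derivative[OF chain_cont[OF assms(1,2)] assms(3)])
  then have "((\<lambda>x. ds j 0 + integral {0..x} (ds (Suc j))) has_real_derivative ds (Suc j) x) (at x within {0..l})"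
    by (intro derivative_eq_intros) auto
  then show ?thesis
  proof (rule has_field_derivative_transform_within[where d=1])
    show "ds j 0 + integral {0..y} (ds (Suc j)) = ds j y" if "y \<in> {0..l}" for y
      using chain_eq[OF assms(1) _ that, of j] assms(2) by simp
  qed (use assms in auto)
qed

lemma chain_trunc: "sobolev_derivs l k f ds \<Longrightarrow> m \<le> k \<Longrightarrow> sobolev_derivs l m f ds"
  unfolding sobolev_derivs_def by (meson le_trans less_le_trans)

lemma chain_lin:
  assumes "sobolev_derivs l k f ds" "sobolev_derivs l k g es"
  shows "sobolev_derivs l k (\<lambda>z. a * f z + b * g z) (\<lambda>j z. a * ds j z + b * es j z)"
  unfolding sobolev_derivs_def
proof (intro conjI allI impI ballI)
  show "(\<lambda>z. a * ds 0 z + b * es 0 z) = (\<lambda>z. a * f z + b * g z)"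
    using chain_0[OF assms(1)] chain_0[OF assms(2)] by simp
  fix j assume "j \<le> k"
  then show "L2 l (\<lambda>z. a * ds j z + b * es j z)"
    using chain_L2[OF assms(1)] chain_L2[OF assms(2)] by (intro L2_add L2_cmul) auto
next
  fix j x assume j: "j < k" and x: "x \<in> {0..l}"
  have i1: "ds (Suc j) integrable_on {0..x}" "es (Suc j) integrable_on {0..x}"
    using j x chain_int[OF assms(1), of "Suc j"] chain_int[OF assms(2), of "Suc j"] int_sub by auto
  have "integral {0..x} (\<lambda>z. a * ds (Suc j) z + b * es (Suc j) z)
      = a * integral {0..x} (ds (Suc j)) + b * integral {0..x} (es (Suc j))"
    using i1 by (simp add: integral_add int_cmul)
  then show "a * ds j x + b * es j x = a * ds j 0 + b * es j 0 +
        integral {0..x} (\<lambda>z. a * ds (Suc j) z + b * es (Suc j) z)"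
    using chain_eq[OF assms(1) j x] chain_eq[OF assms(2) j x] by (simp add: algebra_simps)
qed

lemma sd_chain: "in_H k l f \<Longrightarrow> sobolev_derivs l k f (sd l k f)"
  unfolding in_H_def sd_def by (metis someI_ex)

lemma chain_unique1:
  assumes l: "0 < l" and d: "sobolev_derivs l 2 f ds" and e: "sobolev_derivs l 2 f es"
  shows "\<forall>x\<in>{0..l}. ds 1 x = es 1 x"
proof
  fix x assume x: "x \<in> {0..l}"
  let ?g = "\<lambda>z. ds 1 z - es 1 z"
  have c: "continuous_on {0..l} ?g"
    using chain_cont[OF d, of 1] chain_cont[OF e, of 1] by (intro continuous_intros) auto
  have D1: "((\<lambda>x. integral {0..x} ?g) has_real_derivative ?g x) (at x within {0..l})"
    by (rule integral_has_real_derivative[OF c x])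
  have z: "integral {0..y} ?g = 0" if y: "y \<in> {0..l}" for y
  proof -
    have "ds 1 integrable_on {0..y}" "es 1 integrable_on {0..y}"
      using y chain_int[OF d, of 1] chain_int[OF e, of 1] int_sub by auto
    then have "integral {0..y} ?g = integral {0..y} (ds 1) - integral {0..y} (es 1)"
      by (simp add: integral_diff)
    also have "\<dots> = 0"
      using chain_eq[OF d, of 0 y] chain_eq[OF e, of 0 y] y chain_0[OF d] chain_0[OF e] by simp
    finally show ?thesis .
  qed
  have D2: "((\<lambda>x. integral {0..x} ?g) has_real_derivative 0) (at x within {0..l})"
    by (rule has_field_derivative_transform_within[where d=1 and f="\<lambda>_. 0"]) (use x z in auto)
  have "?g x = 0"
    using vector_derivative_unique_within_closed_interval[of 0 l x] D1 D2 l x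
    unfolding has_real_derivative_iff_has_vector_derivative by (metis cbox_interval)
  then show "ds 1 x = es 1 x" by simp
qed

lemma ae_zero_HK:
  fixes g :: "real \<Rightarrow> real"
  assumes gi: "g integrable_on {0..l}" and z: "\<forall>x\<in>{0..l}. integral {0..x} g = 0"
  shows "integral ({a<..} \<inter> {0..l}) g = 0"
proof (cases "a < 0")
  case True
  then have "{a<..} \<inter> {0..l} = {0..l}" by auto
  moreover have "integral {0..l} g = 0"
  proof (cases "0 \<le> l")
    case True then show ?thesis using z by auto
  qed simp
  ultimately show ?thesis by simp
next
  case False
  show ?thesis
  proof (cases "a \<le> l")
    case True
    have e: "{a<..} \<inter> {0..l} = {a<..l}" using False by auto
    have "integral {a<..l} g = integral {a..l} g"
      by (rule integral_spike_set) (auto intro: negligible_subset[OF negligible_sing[of a]])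
    also have "integral {a..l} g = integral {0..l} g - integral {0..a} g"
      using Henstock_Kurzweil_Integration.integral_combine[of 0 a l g] gi False True by simp
    also have "\<dots> = 0" using z False True by auto
    finally show ?thesis using e by simp
  next
    case False2: False
    then have "{a<..} \<inter> {0..l} = {}" by auto
    then show ?thesis by simp
  qed
qed

lemma ennreal_pm: "ennreal a = ennreal (-a) \<Longrightarrow> (a::real) = 0"
proof (cases "a \<ge> 0")
  case True
  assume e: "ennreal a = ennreal (-a)"
  have "ennreal (-a) = 0" using True by (simp add: ennreal_eq_0_iff)
  then have "ennreal a = 0" using e by simp
  then have "a \<le> 0" by (simp add: ennreal_eq_0_iff)
  then show ?thesis using True by simp
next
  case False
  assume e: "ennreal a = ennreal (-a)"
  have "ennreal a = 0" using False by (simp add: ennreal_eq_0_iff)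
  then have "ennreal (-a) = 0" using e by simp
  then have "-a \<le> 0" by (simp only: ennreal_eq_0_iff)
  then show ?thesis using False by simp
qed

lemma ae_zero:
  fixes g :: "real \<Rightarrow> real"
  assumes ga: "g absolutely_integrable_on {0..l}" and z: "\<forall>x\<in>{0..l}. integral {0..x} g = 0"
  shows "negligible {x\<in>{0..l}. g x \<noteq> 0}"
proof -
  define G where "G x = indicator {0..l} x * g x" for x
  have Gi: "integrable lebesgue G"
    using ga unfolding set_integrable_def G_def by simp
  have gi: "g integrable_on {0..l}" using ga absolutely_integrable_on_def by blast
  have G0: "(LINT x|lebesgue. indicator {a<..} x * G x) = 0" for a
  proof -
    have si: "set_integrable lebesgue ({a<..} \<inter> {0..l}) g"
      by (rule set_integrable_subset[OF ga]) auto
    have "(LINT x|lebesgue. indicator {a<..} x * G x) = set_lebesgue_integral lebesgue ({a<..} \<inter> {0..l}) g"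
      unfolding set_lebesgue_integral_def G_def
      by (intro Bochner_Integration.integral_cong) (auto simp: indicator_def)
    also have "\<dots> = integral ({a<..} \<inter> {0..l}) g"
      by (rule set_lebesgue_integral_eq_integral(2)[OF si])
    also have "\<dots> = 0" by (rule ae_zero_HK[OF gi z])
    finally show ?thesis .
  qed
  have Gm: "G \<in> borel_measurable (completion lborel)"
    using Gi by auto
  obtain h where hb: "h \<in> borel_measurable lborel" and hae: "AE x in lborel. G x = h x"
    using completion_ex_borel_measurable_real[OF Gm] by blast
  have hae': "AE x in lebesgue. G x = h x" using AE_completion[OF hae] .
  have hi: "integrable lborel h"
  proof -
    have "integrable lebesgue h"
      using integrable_cong_AE[OF _ _ hae'] Gi measurable_completion[OF hb] by blast
    then show ?thesis using integrable_completion[of h lborel] hb by simp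
  qed
  have h0: "(LINT x|lborel. indicator {a<..} x * h x) = 0" for a
  proof -
    have m: "(\<lambda>x. indicator {a<..} x * h x) \<in> borel_measurable lborel" using hb by measurable
    have "(LINT x|lborel. indicator {a<..} x * h x) = (LINT x|lebesgue. indicator {a<..} x * h x)"
      using integral_completion[OF m] by simp
    also have "\<dots> = (LINT x|lebesgue. indicator {a<..} x * G x)"
    proof (rule integral_cong_AE)
      have hl: "h \<in> borel_measurable lebesgue" using measurable_completion[OF hb] by simp
      have Gl: "G \<in> borel_measurable lebesgue" using Gi by auto
      show "(\<lambda>x. indicator {a<..} x * h x) \<in> borel_measurable lebesgue"
        using hl by (intro borel_measurable_times borel_measurable_indicator) auto
      show "(\<lambda>x. indicator {a<..} x * G x) \<in> borel_measurable lebesgue"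
        using Gl by (intro borel_measurable_times borel_measurable_indicator) auto
      show "AE x in lebesgue. indicator {a<..} x * h x = indicator {a<..} x * G x"
        using hae' by eventually_elim simp
    qed
    finally show ?thesis using G0 by simp
  qed
  let ?N1 = "density lborel (\<lambda>x. ennreal (h x))"
  let ?N2 = "density lborel (\<lambda>x. ennreal (- h x))"
  have NN: "?N1 = ?N2"
  proof (rule measure_eqI_lessThan)
    show "sets ?N1 = sets borel" "sets ?N2 = sets borel" by auto
    fix a :: real
    let ?f = "\<lambda>x. indicator {a<..} x * h x"
    have fi: "integrable lborel ?f"
      using integrable_mult_indicator[of "{a<..}" lborel h] hi by simp
    have e1: "emeasure ?N1 {a<..} = (\<integral>\<^sup>+ x. ennreal (?f x) \<partial>lborel)"
      using hb by (subst emeasure_density) (auto intro!: nn_integral_cong simp: indicator_def)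
    have e2: "emeasure ?N2 {a<..} = (\<integral>\<^sup>+ x. ennreal (- ?f x) \<partial>lborel)"
      using hb by (subst emeasure_density) (auto intro!: nn_integral_cong simp: indicator_def)
    have f1: "(\<integral>\<^sup>+ x. ennreal (?f x) \<partial>lborel) \<noteq> \<infinity>" "(\<integral>\<^sup>+ x. ennreal (- ?f x) \<partial>lborel) \<noteq> \<infinity>"
      using integrableD[OF fi] by auto
    have "enn2real (\<integral>\<^sup>+ x. ennreal (?f x) \<partial>lborel) = enn2real (\<integral>\<^sup>+ x. ennreal (- ?f x) \<partial>lborel)"
      using real_lebesgue_integral_def[OF fi] h0[of a] by simp
    then have "(\<integral>\<^sup>+ x. ennreal (?f x) \<partial>lborel) = (\<integral>\<^sup>+ x. ennreal (- ?f x) \<partial>lborel)"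
    proof -
      have "(\<integral>\<^sup>+ x. ennreal (?f x) \<partial>lborel) < top" "(\<integral>\<^sup>+ x. ennreal (- ?f x) \<partial>lborel) < top"
        using f1 by (simp_all add: less_top[symmetric])
      then show ?thesis using ennreal_enn2real \<open>enn2real _ = enn2real _\<close> by metis
    qed
    then show "emeasure ?N1 {a<..} = emeasure ?N2 {a<..}" using e1 e2 by simp
    show "emeasure ?N1 {a<..} < \<infinity>" using e1 f1 by (simp add: less_top)
  qed
  have "AE x in lborel. ennreal (h x) = ennreal (- h x)"
    by (rule sigma_finite_measure.density_unique[OF sigma_finite_lborel _ _ NN]) (use hb in auto)
  then have "AE x in lborel. h x = 0"
    by eventually_elim (rule ennreal_pm)
  then have "AE x in lborel. G x = 0" using hae by eventually_elim simp
  then have ae: "AE x in lebesgue. G x = 0" by (rule AE_completion)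
  have ms: "{x \<in> space lebesgue. \<not> G x = 0} \<in> sets lebesgue"
    using Gi by measurable
  have "{x \<in> space lebesgue. \<not> G x = 0} \<in> null_sets lebesgue"
    using AE_iff_null[OF ms] ae by simp
  then have "negligible {x. G x \<noteq> 0}" by (simp add: negligible_iff_null_sets)
  moreover have "{x\<in>{0..l}. g x \<noteq> 0} = {x. G x \<noteq> 0}"
    by (auto simp: G_def indicator_def)
  ultimately show ?thesis by simp
qed

lemma HK_combine: "a \<le> c \<Longrightarrow> c \<le> b \<Longrightarrow> (f::real\<Rightarrow>real) integrable_on {a..b} \<Longrightarrow>
   integral {a..c} f + integral {c..b} f = integral {a..b} f"
  by (rule Henstock_Kurzweil_Integration.integral_combine)

lemma HK_bound: "(f::real\<Rightarrow>real) integrable_on S \<Longrightarrow> g integrable_on S \<Longrightarrow> (\<And>x. x \<in> S \<Longrightarrow> \<bar>f x\<bar> \<le> g x)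
   \<Longrightarrow> \<bar>integral S f\<bar> \<le> integral S g"
  using Henstock_Kurzweil_Integration.integral_norm_bound_integral[of f S g] by simp

lemma contmul_absint:
  fixes p q :: "real \<Rightarrow> real"
  assumes "continuous_on {a..b} p" "q absolutely_integrable_on {a..b}"
  shows "(\<lambda>t. p t * q t) absolutely_integrable_on {a..b}"
proof (rule absolutely_integrable_bounded_measurable_product_real[OF _ _ _ assms(2)])
  show "p \<in> borel_measurable (lebesgue_on {a..b})"
    using continuous_imp_measurable_on_sets_lebesgue[OF assms(1)] by simp
  show "bounded (p ` {a..b})"
    using compact_continuous_image[OF assms(1)] compact_imp_bounded by blast
qed simp

lemma absint_int: "(f::real\<Rightarrow>real) absolutely_integrable_on S \<Longrightarrow> f integrable_on S"
  using absolutely_integrable_on_def by blast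

lemma absint_sub: "(f::real\<Rightarrow>real) absolutely_integrable_on {a..b} \<Longrightarrow> {c..d} \<subseteq> {a..b} \<Longrightarrow> f absolutely_integrable_on {c..d}"
  by (rule set_integrable_subset) auto

lemma absint_abs: "(f::real\<Rightarrow>real) absolutely_integrable_on S \<Longrightarrow> (\<lambda>x. \<bar>f x\<bar>) integrable_on S"
  by (simp add: absolutely_integrable_on_def)

lemma ibp:
  fixes P P' q Q :: "real \<Rightarrow> real"
  assumes l: "0 < l"
    and dP: "\<And>x. x \<in> {0..l} \<Longrightarrow> (P has_real_derivative P' x) (at x within {0..l})"
    and cP': "continuous_on {0..l} P'"
    and qa: "q absolutely_integrable_on {0..l}"
    and Qe: "\<And>x. x \<in> {0..l} \<Longrightarrow> Q x = Q 0 + integral {0..x} q"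
  shows "integral {0..l} (\<lambda>x. P' x * Q x + P x * q x) = P l * Q l - P 0 * Q 0"
proof -
  have cP: "continuous_on {0..l} P"
    unfolding continuous_on_eq_continuous_within using dP DERIV_continuous by blast
  have qi: "q integrable_on {0..l}" using qa absint_int by blast
  have cQ: "continuous_on {0..l} Q"
  proof -
    have "continuous_on {0..l} (\<lambda>x. Q 0 + integral {0..x} q)"
      using indefinite_integral_continuous_1[OF qi] by (intro continuous_intros)
    then show ?thesis by (rule continuous_on_eq) (metis Qe)
  qed
  obtain M where M: "\<And>x. x \<in> {0..l} \<Longrightarrow> \<bar>P' x\<bar> \<le> M"
    using compact_continuous_image[OF cP' compact_Icc]
    unfolding compact_eq_bounded_closed bounded_iff by (metis image_eqI real_norm_def)
  have M0: "0 \<le> M" using M[of 0] l by force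
  define K where "K x = integral {0..x} (\<lambda>t. \<bar>q t\<bar>)" for x
  have absq: "(\<lambda>t. \<bar>q t\<bar>) integrable_on {0..l}" using absint_abs[OF qa] .
  have cK: "continuous_on {0..l} K"
    unfolding K_def using indefinite_integral_continuous_1[OF absq] .
  define F where "F x = P' x * Q x + P x * q x" for x
  have i1: "(\<lambda>x. P' x * Q x) integrable_on {0..l}"
    using cP' cQ by (intro integrable_continuous_interval continuous_intros)
  have i2: "(\<lambda>x. P x * q x) integrable_on {0..l}"
    using contmul_absint[OF cP qa] absint_int by blast
  have Fi: "F integrable_on {0..l}" unfolding F_def using i1 i2 by (rule integrable_add)
  define \<Phi> where "\<Phi> y = integral {0..y} F - P y * Q y" for y
  have sub: "{x..y} \<subseteq> {0..l}" if "x \<in> {0..l}" "y \<in> {0..l}" for x y using that by auto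
  have key: "\<bar>\<Phi> y - \<Phi> x\<bar> \<le> 2 * M * (y - x) * (K y - K x)"
    if xy: "x \<in> {0..l}" "y \<in> {0..l}" "x \<le> y" for x y
  proof -
    have sb: "{x..y} \<subseteq> {0..l}" using sub[OF xy(1,2)] .
    have qxy: "q integrable_on {x..y}" using integrable_subinterval_real[OF qi sb] .
    have qaxy: "q absolutely_integrable_on {x..y}" using absint_sub[OF qa sb] .
    have absqxy: "(\<lambda>t. \<bar>q t\<bar>) integrable_on {x..y}" using integrable_subinterval_real[OF absq sb] .
    have P'xy: "P' integrable_on {x..y}"
      using cP' sb by (intro integrable_continuous_interval) (meson continuous_on_subset)
    have i1xy: "(\<lambda>x. P' x * Q x) integrable_on {x..y}" using integrable_subinterval_real[OF i1 sb] .
    have i2xy: "(\<lambda>x. P x * q x) integrable_on {x..y}" using integrable_subinterval_real[OF i2 sb] .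
    have Fxy: "integral {x..y} F = integral {x..y} (\<lambda>x. P' x * Q x) + integral {x..y} (\<lambda>x. P x * q x)"
      unfolding F_def using i1xy i2xy by (rule integral_add)
    have Fc: "integral {0..y} F = integral {0..x} F + integral {x..y} F"
      using HK_combine[of 0 x y F] Fi integrable_subinterval_real[OF Fi, of 0 y] xy by auto
    have qc: "integral {0..y} q = integral {0..x} q + integral {x..y} q"
      using HK_combine[of 0 x y q] integrable_subinterval_real[OF qi, of 0 y] xy by auto
    have Qxy: "Q y = Q x + integral {x..y} q" using Qe[OF xy(1)] Qe[OF xy(2)] qc by simp
    have Pxy: "P y = P x + integral {x..y} P'"
    proof -
      have "(P' has_integral (P y - P x)) {x..y}"
      proof (rule fundamental_theorem_of_calculus[OF xy(3)])
        fix t assume t: "t \<in> {x..y}"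
        have "(P has_real_derivative P' t) (at t within {x..y})"
          using dP[of t] t sb by (meson DERIV_subset subsetD)
        then show "(P has_vector_derivative P' t) (at t within {x..y})"
          by (simp add: has_real_derivative_iff_has_vector_derivative)
      qed
      then show ?thesis by (simp add: integral_unique)
    qed
    define A where "A = integral {x..y} (\<lambda>t. (P t - P y) * q t)"
    define B where "B = integral {x..y} (\<lambda>t. P' t * (Q t - Q x))"
    have iA: "(\<lambda>t. (P t - P y) * q t) integrable_on {x..y}"
    proof -
      have "continuous_on {x..y} (\<lambda>t. P t - P y)"
        using continuous_on_subset[OF cP sb] by (intro continuous_intros)
      then show ?thesis using contmul_absint[OF _ qaxy, of "\<lambda>t. P t - P y"] absint_int by blast
    qed
    have iB: "(\<lambda>t. P' t * (Q t - Q x)) integrable_on {x..y}"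
      using cP' cQ sb by (intro integrable_continuous_interval continuous_intros) (auto intro: continuous_on_subset)
    have Aeq: "A = integral {x..y} (\<lambda>x. P x * q x) - P y * integral {x..y} q"
    proof -
      have "A = integral {x..y} (\<lambda>t. P t * q t - P y * q t)"
        unfolding A_def by (simp add: algebra_simps)
      also have "\<dots> = integral {x..y} (\<lambda>x. P x * q x) - integral {x..y} (\<lambda>t. P y * q t)"
        using i2xy int_cmul[OF qxy, of "P y"] by (rule integral_diff)
      finally show ?thesis by simp
    qed
    have Beq: "B = integral {x..y} (\<lambda>x. P' x * Q x) - Q x * integral {x..y} P'"
    proof -
      have "B = integral {x..y} (\<lambda>t. P' t * Q t - Q x * P' t)"
        unfolding B_def by (simp add: algebra_simps)
      also have "\<dots> = integral {x..y} (\<lambda>x. P' x * Q x) - integral {x..y} (\<lambda>t. Q x * P' t)"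
        using i1xy int_cmul[OF P'xy, of "Q x"] by (rule integral_diff)
      finally show ?thesis by simp
    qed
    have diff: "\<Phi> y - \<Phi> x = A + B"
      unfolding \<Phi>_def Fc Fxy Aeq Beq Qxy Pxy by (simp add: algebra_simps)
    have Kxy: "K y - K x = integral {x..y} (\<lambda>t. \<bar>q t\<bar>)"
      using HK_combine[of 0 x y "\<lambda>t. \<bar>q t\<bar>"] integrable_subinterval_real[OF absq, of 0 y] xy
      unfolding K_def by auto
    have Kpos: "0 \<le> K y - K x" unfolding Kxy by (rule integral_nonneg[OF absqxy]) simp
    have bA: "\<bar>A\<bar> \<le> M * (y - x) * (K y - K x)"
    proof -
      have "\<bar>A\<bar> \<le> integral {x..y} (\<lambda>t. M * (y - x) * \<bar>q t\<bar>)"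
        unfolding A_def
      proof (rule HK_bound[OF iA int_cmul[OF absqxy]])
        fix t assume t: "t \<in> {x..y}"
        have "\<bar>P t - P y\<bar> \<le> M * \<bar>t - y\<bar>"
          using field_differentiable_bound[of "{0..l}" P P' M t y] dP M t sb xy by auto
        also have "\<dots> \<le> M * (y - x)" using t M0 by (intro mult_left_mono) auto
        finally show "\<bar>(P t - P y) * q t\<bar> \<le> M * (y - x) * \<bar>q t\<bar>"
          by (simp add: abs_mult mult_right_mono)
      qed
      also have "\<dots> = M * (y - x) * (K y - K x)" unfolding Kxy by simp
      finally show ?thesis .
    qed
    have bB: "\<bar>B\<bar> \<le> M * (y - x) * (K y - K x)"
    proof -
      have "\<bar>B\<bar> \<le> integral {x..y} (\<lambda>t. M * (K y - K x))"
        unfolding B_def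
      proof (rule HK_bound[OF iB])
        show "(\<lambda>t. M * (K y - K x)) integrable_on {x..y}" by (rule integrable_const_ivl)
        fix t assume t: "t \<in> {x..y}"
        have t0: "t \<in> {0..l}" using t sb by auto
        have "\<bar>Q t - Q x\<bar> = \<bar>integral {x..t} q\<bar>"
        proof -
          have "integral {0..t} q = integral {0..x} q + integral {x..t} q"
            using HK_combine[of 0 x t q] integrable_subinterval_real[OF qi, of 0 t] xy t t0 by auto
          then show ?thesis using Qe[OF xy(1)] Qe[OF t0] by simp
        qed
        also have "\<dots> \<le> integral {x..t} (\<lambda>t. \<bar>q t\<bar>)"
          using t integrable_subinterval_real[OF qxy, of x t] integrable_subinterval_real[OF absqxy, of x t]
          by (intro HK_bound) auto
        also have "\<dots> \<le> integral {x..y} (\<lambda>t. \<bar>q t\<bar>)"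
          using t integrable_subinterval_real[OF absqxy, of x t]
          by (intro integral_subset_le absqxy) auto
        finally have "\<bar>Q t - Q x\<bar> \<le> K y - K x" unfolding Kxy .
        moreover have "\<bar>P' t\<bar> \<le> M" using M t0 by blast
        ultimately show "\<bar>P' t * (Q t - Q x)\<bar> \<le> M * (K y - K x)"
          by (simp add: abs_mult mult_mono M0)
      qed
      also have "\<dots> = M * (y - x) * (K y - K x)" using xy(3) by simp
      finally show ?thesis .
    qed
    show ?thesis using diff bA bB by simp
  qed
  have D0: "(\<Phi> has_real_derivative 0) (at x within {0..l})" if x: "x \<in> {0..l}" for x
  proof -
    have lim: "((\<lambda>y. 2 * M * \<bar>K y - K x\<bar>) \<longlongrightarrow> 2 * M * \<bar>K x - K x\<bar>) (at x within {0..l})"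
      using cK x unfolding continuous_on_def by (intro tendsto_intros) auto
    have "((\<lambda>y. (\<Phi> y - \<Phi> x) / (y - x)) \<longlongrightarrow> 0) (at x within {0..l})"
    proof (rule Lim_null_comparison)
      show "((\<lambda>y. 2 * M * \<bar>K y - K x\<bar>) \<longlongrightarrow> 0) (at x within {0..l})" using lim by simp
      show "\<forall>\<^sub>F y in at x within {0..l}. norm ((\<Phi> y - \<Phi> x) / (y - x)) \<le> 2 * M * \<bar>K y - K x\<bar>"
        unfolding eventually_at_filter
      proof (intro always_eventually allI impI)
        fix y assume y: "y \<noteq> x" "y \<in> {0..l}"
        have b: "\<bar>\<Phi> y - \<Phi> x\<bar> \<le> 2 * M * \<bar>y - x\<bar> * \<bar>K y - K x\<bar>"
        proof (cases "x \<le> y")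
          case True
          have "2*M*(y-x)*(K y - K x) \<le> 2*M*(y-x)*\<bar>K y - K x\<bar>"
            by (intro mult_left_mono) (use True M0 in auto)
          then show ?thesis using key[OF x y(2) True] True by simp
        next
          case False
          have "2*M*(x-y)*(K x - K y) \<le> 2*M*(x-y)*\<bar>K x - K y\<bar>"
            by (intro mult_left_mono) (use False M0 in auto)
          then show ?thesis using key[OF y(2) x] False by (simp add: abs_minus_commute)
        qed
        have "norm ((\<Phi> y - \<Phi> x) / (y - x)) = \<bar>\<Phi> y - \<Phi> x\<bar> / \<bar>y - x\<bar>" by (simp add: abs_divide)
        also have "\<dots> \<le> 2 * M * \<bar>K y - K x\<bar>"
          using b y(1) by (simp add: divide_le_eq algebra_simps)
        finally show "norm ((\<Phi> y - \<Phi> x) / (y - x)) \<le> 2 * M * \<bar>K y - K x\<bar>" .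
      qed
    qed
    then show ?thesis by (simp add: has_field_derivative_iff)
  qed
  obtain c where c: "\<forall>x\<in>{0..l}. \<Phi> x = c"
    using has_field_derivative_zero_constant[of "{0..l}" \<Phi>] D0 by auto
  have "\<Phi> l = \<Phi> 0" using c l by auto
  then show ?thesis unfolding \<Phi>_def F_def by simp
qed

definition L2v :: "real \<Rightarrow> (nat \<Rightarrow> real \<Rightarrow> real) \<Rightarrow> bool" where
  "L2v l f \<longleftrightarrow> (\<forall>i<4. L2 l (f i))"

definition Qf :: "real \<Rightarrow> (nat \<Rightarrow> real) \<Rightarrow> (nat \<Rightarrow> real \<Rightarrow> real) \<Rightarrow> real" where
  "Qf l c f = integral {0..l} (\<lambda>z. \<Sum>i<4. c i * (f i z)^2)"

definition Bf :: "real \<Rightarrow> (nat \<Rightarrow> real) \<Rightarrow> (nat \<Rightarrow> real \<Rightarrow> real) \<Rightarrow> (nat \<Rightarrow> real \<Rightarrow> real) \<Rightarrow> real" where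
  "Bf l c f g = integral {0..l} (\<lambda>z. \<Sum>i<4. c i * (f i z * g i z))"

lemma L2v_add: "L2v l f \<Longrightarrow> L2v l g \<Longrightarrow> L2v l (\<lambda>i z. f i z + g i z)"
  by (simp add: L2v_def L2_add)

lemma L2v_diff: "L2v l f \<Longrightarrow> L2v l g \<Longrightarrow> L2v l (\<lambda>i z. f i z - g i z)"
  by (simp add: L2v_def L2_diff)

lemma L2v_cmul: "L2v l f \<Longrightarrow> L2v l (\<lambda>i z. a * f i z)"
  by (simp add: L2v_def L2_cmul)

lemma intB: "L2v l f \<Longrightarrow> L2v l g \<Longrightarrow> (\<lambda>z. \<Sum>i<4. c i * (f i z * g i z)) integrable_on {0..l}"
  by (intro integrable_sum int_cmul) (auto simp: L2v_def L2_prod_int)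

lemma intQ: "L2v l f \<Longrightarrow> (\<lambda>z. \<Sum>i<4. c i * (f i z)^2) integrable_on {0..l}"
  using intB[of l f f c] by (simp add: power2_eq_square)

lemma Qf_nonneg: "(\<And>i. 0 \<le> c i) \<Longrightarrow> L2v l f \<Longrightarrow> 0 \<le> Qf l c f"
  unfolding Qf_def by (rule integral_nonneg[OF intQ]) (auto intro!: sum_nonneg)

lemma CS_real:
  fixes A B C :: real
  assumes A: "0 \<le> A" and C: "0 \<le> C" and h: "\<And>t. 0 < t \<Longrightarrow> 2 * \<bar>B\<bar> \<le> t * A + C / t"
  shows "\<bar>B\<bar> \<le> sqrt A * sqrt C"
proof (cases "A > 0 \<and> C > 0")
  case True
  define t where "t = sqrt C / sqrt A"
  have t: "0 < t" using True by (simp add: t_def)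
  have "t * A = sqrt A * sqrt C"
    using True unfolding t_def by (simp add: field_simps)
  moreover have "C / t = sqrt A * sqrt C"
    using True unfolding t_def by (simp add: field_simps)
  ultimately show ?thesis using h[OF t] by simp
next
  case False
  have "B = 0"
  proof (rule ccontr)
    assume B: "B \<noteq> 0"
    then have Bp: "0 < \<bar>B\<bar>" by simp
    show False
    proof (cases "A = 0")
      case True
      define t where "t = (C + 1) / \<bar>B\<bar>"
      have t: "0 < t" using Bp C by (simp add: t_def)
      have "C / t = C * \<bar>B\<bar> / (C + 1)" using C Bp by (simp add: t_def)
      also have "\<dots> < \<bar>B\<bar>" using C Bp by (simp add: divide_less_eq)
      finally show False using h[OF t] True Bp by simp
    next
      case False2: False
      then have "C = 0" using False A C by auto
      define t where "t = \<bar>B\<bar> / (A + 1)"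
      have t: "0 < t" using Bp A by (simp add: t_def)
      have "t * A = \<bar>B\<bar> * A / (A + 1)" by (simp add: t_def)
      also have "\<dots> < \<bar>B\<bar>" using A Bp by (simp add: divide_less_eq)
      finally show False using h[OF t] \<open>C = 0\<close> Bp by simp
    qed
  qed
  then show ?thesis using A C by simp
qed

lemma ineq_pt: "0 < (t::real) \<Longrightarrow> 2 * \<bar>x * y\<bar> \<le> t * x^2 + y^2 / t"
proof -
  assume t: "0 < t"
  have "0 \<le> (t * \<bar>x\<bar> - \<bar>y\<bar>)^2" by simp
  then have "2 * t * \<bar>x * y\<bar> \<le> t^2 * x^2 + y^2"
    by (simp add: power2_eq_square algebra_simps abs_mult)
  then show ?thesis using t by (simp add: field_simps power2_eq_square)
qed

lemma Bf_CS:
  assumes c: "\<And>i. 0 \<le> c i" and f: "L2v l f" and g: "L2v l g"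
  shows "\<bar>Bf l c f g\<bar> \<le> sqrt (Qf l c f) * sqrt (Qf l c g)"
proof (rule CS_real[OF Qf_nonneg[OF c f] Qf_nonneg[OF c g]])
  fix t :: real assume t: "0 < t"
  have "\<bar>Bf l c f g\<bar> \<le> integral {0..l} (\<lambda>z. (\<Sum>i<4. c i * (t * (f i z)^2 + (g i z)^2 / t)) / 2)"
    unfolding Bf_def
  proof (rule HK_bound[OF intB[OF f g]])
    show "(\<lambda>z. (\<Sum>i<4. c i * (t * (f i z)\<^sup>2 + (g i z)\<^sup>2 / t)) / 2) integrable_on {0..l}"
      using f g by (intro int_cdiv integrable_sum int_cmul integrable_add int_cdiv) (auto simp: L2v_def L2_sq)
    fix z
    have "\<bar>\<Sum>i<4. c i * (f i z * g i z)\<bar> \<le> (\<Sum>i<4. \<bar>c i * (f i z * g i z)\<bar>)" by (rule sum_abs)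
    also have "\<dots> \<le> (\<Sum>i<4. c i * (t * (f i z)^2 + (g i z)^2 / t) / 2)"
    proof (rule sum_mono)
      fix i
      have "2 * \<bar>f i z * g i z\<bar> \<le> t * (f i z)^2 + (g i z)^2 / t" by (rule ineq_pt[OF t])
      then have "\<bar>f i z * g i z\<bar> \<le> (t * (f i z)^2 + (g i z)^2 / t) / 2" by simp
      then have "c i * \<bar>f i z * g i z\<bar> \<le> c i * ((t * (f i z)^2 + (g i z)^2 / t) / 2)"
        using c[of i] by (rule mult_left_mono)
      then show "\<bar>c i * (f i z * g i z)\<bar> \<le> c i * (t * (f i z)^2 + (g i z)^2 / t) / 2"
        using c[of i] by (simp add: abs_mult)
    qed
    finally show "\<bar>\<Sum>i<4. c i * (f i z * g i z)\<bar> \<le> (\<Sum>i<4. c i * (t * (f i z)\<^sup>2 + (g i z)\<^sup>2 / t)) / 2"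
      by (simp add: sum_divide_distrib)
  qed
  also have "\<dots> = (t * Qf l c f + Qf l c g / t) / 2"
  proof -
    have e: "(\<lambda>z. (\<Sum>i<4. c i * (t * (f i z)^2 + (g i z)^2 / t)) / 2)
       = (\<lambda>z. (t * (\<Sum>i<4. c i * (f i z)^2) + (\<Sum>i<4. c i * (g i z)^2) / t) / 2)"
      by (simp add: algebra_simps sum_distrib_left sum.distrib sum_divide_distrib)
    show ?thesis unfolding e Qf_def
      using intQ[OF f, of c] intQ[OF g, of c]
      by (simp add: integral_add int_cmul int_cdiv integral_divide integral_mult_right)
  qed
  finally show "2 * \<bar>Bf l c f g\<bar> \<le> t * Qf l c f + Qf l c g / t" by simp
qed

lemma Qf_add_le:
  assumes c: "\<And>i. 0 \<le> c i" and f: "L2v l f" and g: "L2v l g"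
  shows "Qf l c (\<lambda>i z. f i z + g i z) \<le> 2 * Qf l c f + 2 * Qf l c g"
proof -
  have "Qf l c (\<lambda>i z. f i z + g i z) \<le> integral {0..l} (\<lambda>z. 2 * (\<Sum>i<4. c i * (f i z)^2) + 2 * (\<Sum>i<4. c i * (g i z)^2))"
    unfolding Qf_def
  proof (rule integral_le)
    show "(\<lambda>z. \<Sum>i<4. c i * (f i z + g i z)\<^sup>2) integrable_on {0..l}"
      using intQ[OF L2v_add[OF f g]] by simp
    show "(\<lambda>z. 2 * (\<Sum>i<4. c i * (f i z)\<^sup>2) + 2 * (\<Sum>i<4. c i * (g i z)\<^sup>2)) integrable_on {0..l}"
      using intQ[OF f] intQ[OF g] by (intro integrable_add int_cmul)
    fix z
    have "(\<Sum>i<4. c i * (f i z + g i z)\<^sup>2) \<le> (\<Sum>i<4. 2 * (c i * (f i z)^2) + 2 * (c i * (g i z)^2))"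
    proof (rule sum_mono)
      fix i
      have "(f i z + g i z)^2 \<le> 2 * (f i z)^2 + 2 * (g i z)^2"
      proof -
        have "0 \<le> (f i z - g i z)^2" by simp
        then show ?thesis by (simp add: power2_eq_square algebra_simps)
      qed
      then show "c i * (f i z + g i z)\<^sup>2 \<le> 2 * (c i * (f i z)\<^sup>2) + 2 * (c i * (g i z)\<^sup>2)"
        using c[of i] mult_left_mono by (fastforce simp: algebra_simps)
    qed
    then show "(\<Sum>i<4. c i * (f i z + g i z)\<^sup>2) \<le> 2 * (\<Sum>i<4. c i * (f i z)\<^sup>2) + 2 * (\<Sum>i<4. c i * (g i z)\<^sup>2)"
      by (simp add: sum.distrib sum_distrib_left)
  qed
  also have "\<dots> = 2 * Qf l c f + 2 * Qf l c g"
    unfolding Qf_def using intQ[OF f] intQ[OF g]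
    by (simp add: integral_add int_cmul integral_mult_right)
  finally show ?thesis .
qed

lemma Qf_expand:
  assumes A: "L2v l A" and P: "L2v l P" and R: "L2v l R"
  shows "Qf l c (\<lambda>i z. A i z + h * (P i z + R i z)) =
    Qf l c A + 2 * h * Bf l c A P + 2 * h * Bf l c A R + h^2 * Qf l c (\<lambda>i z. P i z + R i z)"
proof -
  let ?S = "\<lambda>i z. P i z + R i z"
  have S: "L2v l ?S" using L2v_add[OF P R] .
  have e: "(\<lambda>z. \<Sum>i<4. c i * (A i z + h * (P i z + R i z))^2) =
     (\<lambda>z. (\<Sum>i<4. c i * (A i z)^2) + 2 * h * (\<Sum>i<4. c i * (A i z * P i z))
        + 2 * h * (\<Sum>i<4. c i * (A i z * R i z)) + h^2 * (\<Sum>i<4. c i * (?S i z)^2))"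
    by (rule ext) (simp add: sum.distrib sum_distrib_left power2_eq_square algebra_simps)
  show ?thesis
    unfolding Qf_def Bf_def e
    using intQ[OF A, of c] intB[OF A P, of c] intB[OF A R, of c] intQ[OF S, of c]
    by (simp add: integral_add integrable_add int_cmul integral_mult_right)
qed

lemma deriv_abstract:
  fixes F :: "real \<Rightarrow> real" and Bs :: "real \<Rightarrow> nat \<Rightarrow> real \<Rightarrow> real"
  assumes c: "\<And>i. 0 \<le> c i"
    and A: "L2v l A" and Pp: "L2v l Pp"
    and Bs: "\<And>s. s \<in> S \<Longrightarrow> L2v l (Bs s)"
    and F: "\<And>s. s \<in> S \<Longrightarrow> F s = Qf l c (Bs s)"
    and Ft: "F t = Qf l c A"
    and lim: "((\<lambda>s. Qf l c (\<lambda>i z. (Bs s i z - A i z) / (s - t) - Pp i z)) \<longlongrightarrow> 0) (at t within S)"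
  shows "(F has_real_derivative 2 * Bf l c A Pp) (at t within S)"
proof -
  define R where "R s = (\<lambda>i z. (Bs s i z - A i z) / (s - t) - Pp i z)" for s
  have RL: "L2v l (R s)" if "s \<in> S" for s
    unfolding R_def using Bs[OF that] A Pp
    by (intro L2v_diff) (auto simp: L2v_def intro!: L2_cmul L2_diff[of l] simp: divide_inverse mult.commute[of _ "inverse _"])
  have QR0: "0 \<le> Qf l c (R s)" if "s \<in> S" for s using Qf_nonneg[OF c RL[OF that]] .
  have bound: "\<bar>(F s - F t) / (s - t) - 2 * Bf l c A Pp\<bar>
      \<le> 2 * (sqrt (Qf l c A) * sqrt (Qf l c (R s))) + \<bar>s - t\<bar> * (2 * Qf l c Pp + 2 * Qf l c (R s))"
    if s: "s \<in> S" "s \<noteq> t" for s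
  proof -
    have h: "s - t \<noteq> 0" using s by simp
    have e: "Bs s = (\<lambda>i z. A i z + (s - t) * (Pp i z + R s i z))"
      unfolding R_def using h by (intro ext) (simp add: field_simps)
    have "F s = Qf l c A + 2 * (s - t) * Bf l c A Pp + 2 * (s - t) * Bf l c A (R s)
        + (s - t)^2 * Qf l c (\<lambda>i z. Pp i z + R s i z)"
      using F[OF s(1)] e Qf_expand[OF A Pp RL[OF s(1)], of c "s - t"] by simp
    then have "(F s - F t) / (s - t) - 2 * Bf l c A Pp = 2 * Bf l c A (R s) + (s - t) * Qf l c (\<lambda>i z. Pp i z + R s i z)"
      using Ft h by (simp add: field_simps power2_eq_square)
    also have "\<bar>\<dots>\<bar> \<le> 2 * \<bar>Bf l c A (R s)\<bar> + \<bar>s - t\<bar> * \<bar>Qf l c (\<lambda>i z. Pp i z + R s i z)\<bar>"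
      by (simp add: abs_mult abs_triangle_ineq[THEN order_trans])
    also have "\<dots> \<le> 2 * (sqrt (Qf l c A) * sqrt (Qf l c (R s))) + \<bar>s - t\<bar> * (2 * Qf l c Pp + 2 * Qf l c (R s))"
    proof (intro add_mono mult_left_mono)
      show "\<bar>Bf l c A (R s)\<bar> \<le> sqrt (Qf l c A) * sqrt (Qf l c (R s))"
        by (rule Bf_CS[OF c A RL[OF s(1)]])
      have "0 \<le> Qf l c (\<lambda>i z. Pp i z + R s i z)" by (rule Qf_nonneg[OF c L2v_add[OF Pp RL[OF s(1)]]])
      then show "\<bar>Qf l c (\<lambda>i z. Pp i z + R s i z)\<bar> \<le> 2 * Qf l c Pp + 2 * Qf l c (R s)"
        using Qf_add_le[OF c Pp RL[OF s(1)]] by simp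
    qed auto
    finally show ?thesis .
  qed
  have "((\<lambda>s. (F s - F t) / (s - t) - 2 * Bf l c A Pp) \<longlongrightarrow> 0) (at t within S)"
  proof (rule Lim_null_comparison)
    show "\<forall>\<^sub>F s in at t within S. norm ((F s - F t) / (s - t) - 2 * Bf l c A Pp)
        \<le> 2 * (sqrt (Qf l c A) * sqrt (Qf l c (R s))) + \<bar>s - t\<bar> * (2 * Qf l c Pp + 2 * Qf l c (R s))"
      unfolding eventually_at_filter by (intro always_eventually allI impI) (use bound in auto)
    have l1: "((\<lambda>s. Qf l c (R s)) \<longlongrightarrow> 0) (at t within S)" using lim unfolding R_def .
    have l2: "((\<lambda>s. s - t) \<longlongrightarrow> 0) (at t within S)"
      by (intro tendsto_eq_intros) auto
    have "((\<lambda>s. 2 * (sqrt (Qf l c A) * sqrt (Qf l c (R s))) + \<bar>s - t\<bar> * (2 * Qf l c Pp + 2 * Qf l c (R s)))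
      \<longlongrightarrow> 2 * (sqrt (Qf l c A) * sqrt 0) + \<bar>0\<bar> * (2 * Qf l c Pp + 2 * 0)) (at t within S)"
      using l1 l2 by (intro tendsto_intros)
    then show "((\<lambda>s. 2 * (sqrt (Qf l c A) * sqrt (Qf l c (R s))) + \<bar>s - t\<bar> * (2 * Qf l c Pp + 2 * Qf l c (R s)))
      \<longlongrightarrow> 0) (at t within S)" by simp
  qed
  then have "((\<lambda>s. (F s - F t) / (s - t)) \<longlongrightarrow> 2 * Bf l c A Pp) (at t within S)"
    using Lim_null by blast
  then show ?thesis by (simp add: has_field_derivative_iff)
qed

lemma chain_unique2:
  assumes l: "0 < l" and d: "sobolev_derivs l 2 f ds" and e: "sobolev_derivs l 2 f es"
  shows "negligible {x\<in>{0..l}. ds 2 x \<noteq> es 2 x}"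
proof -
  let ?g = "\<lambda>x. ds 2 x - es 2 x"
  have ga: "?g absolutely_integrable_on {0..l}"
    using chain_L2[OF d, of 2] chain_L2[OF e, of 2] by (intro L2_int L2_diff) auto
  have u1: "\<forall>x\<in>{0..l}. ds 1 x = es 1 x" by (rule chain_unique1[OF l d e])
  have "\<forall>x\<in>{0..l}. integral {0..x} ?g = 0"
  proof
    fix x assume x: "x \<in> {0..l}"
    have "ds 2 integrable_on {0..x}" "es 2 integrable_on {0..x}"
      using x chain_int[OF d, of 2] chain_int[OF e, of 2] int_sub by auto
    then have "integral {0..x} ?g = integral {0..x} (ds 2) - integral {0..x} (es 2)"
      by (simp add: integral_diff)
    also have "\<dots> = 0"
      using chain_eq[OF d, of 1 x] chain_eq[OF e, of 1 x] x u1 l by (simp add: numeral_2_eq_2)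
    finally show "integral {0..x} ?g = 0" .
  qed
  from ae_zero[OF ga this] show ?thesis by simp
qed

lemma ibp_apply:
  assumes l: "0 < l" and d: "sobolev_derivs l 4 w ds" and e: "sobolev_derivs l 2 v es"
    and bc: "ds 2 l = 0" "ds 3 l = 0" "es 0 0 = 0" "es 1 0 = 0"
  shows "integral {0..l} (\<lambda>x. ds 2 x * es 2 x) = integral {0..l} (\<lambda>x. ds 4 x * es 0 x)"
proof -
  have L: "L2 l (ds j)" if "j \<le> 4" for j using chain_L2[OF d that] .
  have Le: "L2 l (es j)" if "j \<le> 2" for j using chain_L2[OF e that] .
  have I1: "integral {0..l} (\<lambda>x. ds 3 x * es 1 x + ds 2 x * es 2 x) = ds 2 l * es 1 l - ds 2 0 * es 1 0"
  proof (rule ibp[OF l])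
    show "(ds 2 has_real_derivative ds 3 x) (at x within {0..l})" if "x \<in> {0..l}" for x
      using chain_deriv[OF d _ that, of 2] by (simp add: numeral_3_eq_3 numeral_2_eq_2 eval_nat_numeral)
    show "continuous_on {0..l} (ds 3)" by (rule chain_cont[OF d]) simp
    show "es 2 absolutely_integrable_on {0..l}" by (rule L2_int[OF Le]) simp
    show "es 1 x = es 1 0 + integral {0..x} (es 2)" if "x \<in> {0..l}" for x
      using chain_eq[OF e _ that, of 1] by (simp add: numeral_2_eq_2)
  qed
  have I2: "integral {0..l} (\<lambda>x. es 1 x * ds 3 x + es 0 x * ds 4 x) = es 0 l * ds 3 l - es 0 0 * ds 3 0"
  proof (rule ibp[OF l])
    show "(es 0 has_real_derivative es 1 x) (at x within {0..l})" if "x \<in> {0..l}" for x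
      using chain_deriv[OF e _ that, of 0] by simp
    show "continuous_on {0..l} (es 1)" by (rule chain_cont[OF e]) simp
    show "ds 4 absolutely_integrable_on {0..l}" by (rule L2_int[OF L]) simp
    show "ds 3 x = ds 3 0 + integral {0..x} (ds 4)" if "x \<in> {0..l}" for x
      using chain_eq[OF d _ that, of 3] by (simp add: eval_nat_numeral)
  qed
  have p1: "(\<lambda>x. ds 3 x * es 1 x) integrable_on {0..l}" by (rule L2_prod_int[OF L Le]) auto
  have p2: "(\<lambda>x. ds 2 x * es 2 x) integrable_on {0..l}" by (rule L2_prod_int[OF L Le]) auto
  have p3: "(\<lambda>x. es 1 x * ds 3 x) integrable_on {0..l}" by (rule L2_prod_int[OF Le L]) auto
  have p4: "(\<lambda>x. es 0 x * ds 4 x) integrable_on {0..l}" by (rule L2_prod_int[OF Le L]) auto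
  have a: "integral {0..l} (\<lambda>x. ds 3 x * es 1 x) + integral {0..l} (\<lambda>x. ds 2 x * es 2 x) = 0"
    using I1 bc integral_add[OF p1 p2] by simp
  have b: "integral {0..l} (\<lambda>x. es 1 x * ds 3 x) + integral {0..l} (\<lambda>x. es 0 x * ds 4 x) = 0"
    using I2 bc integral_add[OF p3 p4] by simp
  show ?thesis using a b by (simp add: mult.commute)
qed

lemma CS1:
  assumes g: "L2 l g" and x: "x \<in> {0..l}"
  shows "(integral {0..x} g)^2 \<le> x * integral {0..x} (\<lambda>t. (g t)^2)"
proof (cases "x = 0")
  case True then show ?thesis by simp
next
  case False
  then have xp: "0 < x" using x by auto
  have gi: "g integrable_on {0..x}" using int_sub[OF L2_int'[OF g] x] .
  have g2: "(\<lambda>t. (g t)^2) integrable_on {0..x}" using int_sub[OF L2_sq[OF g] x] .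
  define I where "I = integral {0..x} g"
  define m where "m = I / x"
  have "0 \<le> integral {0..x} (\<lambda>t. (g t - m)^2)"
  proof (rule integral_nonneg)
    show "(\<lambda>t. (g t - m)^2) integrable_on {0..x}"
    proof -
      have "(\<lambda>t. (g t)^2 - 2 * m * g t + m^2) integrable_on {0..x}"
        using g2 gi by (intro integrable_add integrable_diff int_cmul) auto
      moreover have "(\<lambda>t. (g t - m)^2) = (\<lambda>t. (g t)^2 - 2 * m * g t + m^2)"
        by (rule ext) (simp add: power2_diff algebra_simps)
      ultimately show ?thesis by simp
    qed
  qed simp
  also have "integral {0..x} (\<lambda>t. (g t - m)^2) = integral {0..x} (\<lambda>t. (g t)^2) - 2 * m * I + m^2 * x"
  proof -
    have e: "(\<lambda>t. (g t - m)^2) = (\<lambda>t. ((g t)^2 - 2 * m * g t) + m^2)" by (rule ext) (simp add: power2_diff algebra_simps)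
    have "integral {0..x} (\<lambda>t. ((g t)^2 - 2 * m * g t) + m^2)
        = integral {0..x} (\<lambda>t. (g t)^2 - 2 * m * g t) + integral {0..x} (\<lambda>t. m^2)"
      using g2 gi by (intro integral_add integrable_diff int_cmul) auto
    also have "integral {0..x} (\<lambda>t. (g t)^2 - 2 * m * g t) = integral {0..x} (\<lambda>t. (g t)^2) - 2 * m * I"
      using g2 gi int_cmul[OF gi, of "2*m"] unfolding I_def by (simp add: integral_diff integral_mult_right)
    finally show ?thesis unfolding e using xp by simp
  qed
  finally have "0 \<le> integral {0..x} (\<lambda>t. (g t)^2) - 2 * m * I + m^2 * x" .
  then have "0 \<le> x * integral {0..x} (\<lambda>t. (g t)^2) - I^2"
    using xp unfolding m_def by (simp add: field_simps power2_eq_square)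
  then show ?thesis unfolding I_def by simp
qed

lemma int_sq_mono:
  assumes g: "L2 l g" and x: "x \<in> {0..l}"
  shows "integral {0..x} (\<lambda>t. (g t)^2) \<le> integral {0..l} (\<lambda>t. (g t)^2)"
  using x int_sub[OF L2_sq[OF g] x] L2_sq[OF g]
  by (intro integral_subset_le) auto

lemma pt_bound:
  assumes g: "L2 l g" and x: "x \<in> {0..l}"
  shows "(integral {0..x} g)^2 \<le> l * integral {0..l} (\<lambda>t. (g t)^2)"
proof -
  have "(integral {0..x} g)^2 \<le> x * integral {0..x} (\<lambda>t. (g t)^2)" by (rule CS1[OF g x])
  also have "\<dots> \<le> l * integral {0..l} (\<lambda>t. (g t)^2)"
  proof (rule mult_mono)
    show "integral {0..x} (\<lambda>t. (g t)^2) \<le> integral {0..l} (\<lambda>t. (g t)^2)" by (rule int_sq_mono[OF g x])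
    show "0 \<le> integral {0..x} (\<lambda>t. (g t)^2)"
      using int_sub[OF L2_sq[OF g] x] by (intro integral_nonneg) auto
  qed (use x in auto)
  finally show ?thesis .
qed

lemma int_const_bound:
  assumes "L2 l g" "0 \<le> l" "\<And>x. x \<in> {0..l} \<Longrightarrow> (g x)^2 \<le> C"
  shows "integral {0..l} (\<lambda>t. (g t)^2) \<le> l * C"
proof -
  have "integral {0..l} (\<lambda>t. (g t)^2) \<le> integral {0..l} (\<lambda>t. C)"
    using assms by (intro integral_le L2_sq) auto
  then show ?thesis using assms(2) by simp
qed

lemma poinc:
  assumes l: "0 < l" and d: "sobolev_derivs l 2 f ds" and f0: "f 0 = 0" and d10: "ds 1 0 = 0"
  shows "integral {0..l} (\<lambda>x. (f x)^2 + (ds 1 x)^2 + (ds 2 x)^2)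
     \<le> (l^4 + l^2 + 1) * integral {0..l} (\<lambda>x. (ds 2 x)^2)"
proof -
  define S2 where "S2 = integral {0..l} (\<lambda>x. (ds 2 x)^2)"
  have L0: "L2 l f" using chain_L2[OF d, of 0] chain_0[OF d] by simp
  have L1: "L2 l (ds 1)" using chain_L2[OF d, of 1] by simp
  have L2': "L2 l (ds 2)" using chain_L2[OF d, of 2] by simp
  have S1b: "integral {0..l} (\<lambda>x. (ds 1 x)^2) \<le> l * (l * S2)"
  proof (rule int_const_bound[OF L1])
    fix x assume x: "x \<in> {0..l}"
    have "ds 1 x = integral {0..x} (ds 2)" using chain_eq[OF d, of 1 x] x d10 by (simp add: numeral_2_eq_2)
    then show "(ds 1 x)^2 \<le> l * S2" using pt_bound[OF L2' x] unfolding S2_def by simp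
  qed (use l in auto)
  have S0b: "integral {0..l} (\<lambda>x. (f x)^2) \<le> l * (l * (l * (l * S2)))"
  proof (rule int_const_bound[OF L0])
    fix x assume x: "x \<in> {0..l}"
    have "f x = integral {0..x} (ds 1)" using chain_eq[OF d, of 0 x] x f0 chain_0[OF d] by simp
    then have "(f x)^2 \<le> l * integral {0..l} (\<lambda>t. (ds 1 t)^2)" using pt_bound[OF L1 x] by simp
    also have "\<dots> \<le> l * (l * (l * S2))" using S1b l by (intro mult_left_mono) auto
    finally show "(f x)^2 \<le> l * (l * (l * S2))" .
  qed (use l in auto)
  have "integral {0..l} (\<lambda>x. (f x)^2 + (ds 1 x)^2 + (ds 2 x)^2)
      = integral {0..l} (\<lambda>x. (f x)^2) + integral {0..l} (\<lambda>x. (ds 1 x)^2) + S2"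
    unfolding S2_def using L2_sq[OF L0] L2_sq[OF L1] L2_sq[OF L2']
    by (simp add: integral_add integrable_add)
  also have "\<dots> \<le> l * (l * (l * (l * S2))) + l * (l * S2) + S2" using S0b S1b by simp
  also have "\<dots> = (l^4 + l^2 + 1) * S2" by (simp add: algebra_simps power2_eq_square power4_eq_xxxx)
  finally show ?thesis unfolding S2_def .
qed

definition cfP :: "params \<Rightarrow> nat \<Rightarrow> real" where
  "cfP P i = (if i < 2 then p_rho P * p_A P else p_E P * p_I P)"

definition comps :: "params \<Rightarrow> state \<Rightarrow> nat \<Rightarrow> real \<Rightarrow> real" where
  "comps P s i = (if i = 0 then v1 s else if i = 1 then v2 s
      else if i = 2 then sd (p_ell P) 2 (w1 s) 2 else sd (p_ell P) 2 (w2 s) 2)"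

definition En :: "params \<Rightarrow> state \<Rightarrow> real" where
  "En P s = Qf (p_ell P) (cfP P) (comps P s)"

lemma sum4: "(\<Sum>i<(4::nat). f i) = f 0 + f 1 + f 2 + f 3"
  by (simp add: eval_nat_numeral)

lemma cfP_nonneg: "p_rho P > 0 \<Longrightarrow> p_A P > 0 \<Longrightarrow> p_E P > 0 \<Longrightarrow> p_I P > 0 \<Longrightarrow> 0 \<le> cfP P i"
  by (simp add: cfP_def)

lemma integrand_eq:
  "(\<lambda>z. \<Sum>i<4. cfP P i * (comps P s i z)^2) =
   (\<lambda>z. p_rho P * p_A P * ((v1 s z)^2 + (v2 s z)^2)
        + p_E P * p_I P * ((sd (p_ell P) 2 (w1 s) 2 z)^2 + (sd (p_ell P) 2 (w2 s) 2 z)^2))"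
  by (rule ext) (simp add: sum4 cfP_def comps_def algebra_simps)

lemma X_norm_En:
  assumes pos: "p_rho P > 0" "p_A P > 0" "p_E P > 0" "p_I P > 0"
    "p_I1 P > 0" "p_I2 P > 0" "p_I3 P > 0" "p_kappa P > 0"
  shows "En P s \<le> (X_norm P s)^2" "sqrt (En P s) \<le> X_norm P s"
proof -
  let ?f = "\<lambda>z. \<Sum>i<4. cfP P i * (comps P s i z)^2"
  have En0: "0 \<le> En P s"
  proof (cases "?f integrable_on {0..p_ell P}")
    case True
    then show ?thesis unfolding En_def Qf_def
      by (rule integral_nonneg) (auto intro!: sum_nonneg mult_nonneg_nonneg cfP_nonneg pos)
  next
    case False
    then show ?thesis unfolding En_def Qf_def by (simp add: not_integrable_integral)
  qed
  define rest where "rest = p_I1 P * (om1 s)^2 + p_I2 P * (om2 s)^2 + p_I3 P * (om3 s)^2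
     + p_kappa P * ((q1 s)^2 + (q2 s)^2 + (q3 s)^2 + (q4 s)^2)"
  have r0: "0 \<le> rest" unfolding rest_def using pos by (intro add_nonneg_nonneg mult_nonneg_nonneg) auto
  have X: "X_norm P s = sqrt (En P s + rest)"
    unfolding X_norm_def En_def Qf_def integrand_eq rest_def Let_def by (simp add: algebra_simps)
  show "En P s \<le> (X_norm P s)^2" unfolding X using En0 r0 by simp
  show "sqrt (En P s) \<le> X_norm P s" unfolding X using r0 by simp
qed

lemma inX_D:
  assumes "in_X P s"
  shows "in_H 2 (p_ell P) (w1 s)" "in_H 2 (p_ell P) (w2 s)" "L2 (p_ell P) (v1 s)" "L2 (p_ell P) (v2 s)"
    "w1 s 0 = 0" "w2 s 0 = 0" "sd (p_ell P) 2 (w1 s) 1 0 = 0" "sd (p_ell P) 2 (w2 s) 1 0 = 0"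
  using assms unfolding in_X_def Let_def by auto

lemma inDF_D:
  assumes "in_DF P s"
  shows "in_X P s" "in_H 4 (p_ell P) (w1 s)" "in_H 4 (p_ell P) (w2 s)"
    "sd (p_ell P) 4 (w1 s) 2 (p_ell P) = 0" "sd (p_ell P) 4 (w1 s) 3 (p_ell P) = 0"
    "sd (p_ell P) 4 (w2 s) 2 (p_ell P) = 0" "sd (p_ell P) 4 (w2 s) 3 (p_ell P) = 0"
    "in_H 2 (p_ell P) (v1 s)" "in_H 2 (p_ell P) (v2 s)" "v1 s 0 = 0" "v2 s 0 = 0"
    "sd (p_ell P) 2 (v1 s) 1 0 = 0" "sd (p_ell P) 2 (v2 s) 1 0 = 0"
  using assms unfolding in_DF_def Let_def by auto

lemma L2v_comps:
  assumes "in_X P s"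
  shows "L2v (p_ell P) (comps P s)"
  unfolding L2v_def comps_def
  using inX_D[OF assms] chain_L2[OF sd_chain, of 2 "p_ell P" "w1 s" 2] chain_L2[OF sd_chain, of 2 "p_ell P" "w2 s" 2]
  by auto

lemma y_bound:
  assumes pos: "p_rho P > 0" "p_A P > 0" "p_E P > 0" "p_I P > 0" "p_ell P > 0"
    and X: "in_X P s"
  shows "y_out P s \<le> (2 * sqrt ((p_ell P^4 + p_ell P^2 + 1) / (p_E P * p_I P)) + 2 * sqrt (1 / (p_rho P * p_A P))) * sqrt (En P s)"
proof -
  let ?l = "p_ell P"
  let ?K = "?l^4 + ?l^2 + 1"
  let ?ra = "p_rho P * p_A P" and ?ei = "p_E P * p_I P"
  have ra: "0 < ?ra" and ei: "0 < ?ei" using pos by auto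
  note D = inX_D[OF X]
  have c1: "sobolev_derivs ?l 2 (w1 s) (sd ?l 2 (w1 s))" by (rule sd_chain[OF D(1)])
  have c2: "sobolev_derivs ?l 2 (w2 s) (sd ?l 2 (w2 s))" by (rule sd_chain[OF D(2)])
  define S1 where "S1 = integral {0..?l} (\<lambda>x. (sd ?l 2 (w1 s) 2 x)^2)"
  define S2 where "S2 = integral {0..?l} (\<lambda>x. (sd ?l 2 (w2 s) 2 x)^2)"
  define V1 where "V1 = integral {0..?l} (\<lambda>x. (v1 s x)^2)"
  define V2 where "V2 = integral {0..?l} (\<lambda>x. (v2 s x)^2)"
  have iS1: "(\<lambda>x. (sd ?l 2 (w1 s) 2 x)^2) integrable_on {0..?l}" using L2_sq[OF chain_L2[OF c1]] by simp
  have iS2: "(\<lambda>x. (sd ?l 2 (w2 s) 2 x)^2) integrable_on {0..?l}" using L2_sq[OF chain_L2[OF c2]] by simp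
  have iV1: "(\<lambda>x. (v1 s x)^2) integrable_on {0..?l}" using L2_sq[OF D(3)] .
  have iV2: "(\<lambda>x. (v2 s x)^2) integrable_on {0..?l}" using L2_sq[OF D(4)] .
  have nn: "0 \<le> S1" "0 \<le> S2" "0 \<le> V1" "0 \<le> V2"
    unfolding S1_def S2_def V1_def V2_def using iS1 iS2 iV1 iV2 by (auto intro!: integral_nonneg)
  have Ee: "En P s = ?ra * (V1 + V2) + ?ei * (S1 + S2)"
    unfolding En_def Qf_def integrand_eq S1_def S2_def V1_def V2_def
    using iS1 iS2 iV1 iV2
    by (simp add: integral_add integrable_add int_cmul integral_mult_right)
  have h1: "H2_norm ?l (w1 s) \<le> sqrt (?K * S1)"
    unfolding H2_norm_def S1_def using poinc[OF pos(5) c1 D(5) D(7)] by simp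
  have h2: "H2_norm ?l (w2 s) \<le> sqrt (?K * S2)"
    unfolding H2_norm_def S2_def using poinc[OF pos(5) c2 D(6) D(8)] by simp
  have "?K * S1 \<le> ?K / ?ei * En P s"
  proof -
    have "S1 \<le> En P s / ?ei" using Ee nn ra ei by (simp add: field_simps)
    then have "?K * S1 \<le> ?K * (En P s / ?ei)" by (rule mult_left_mono) (simp add: add_nonneg_nonneg)
    then show ?thesis by simp
  qed
  then have h1': "sqrt (?K * S1) \<le> sqrt (?K / ?ei) * sqrt (En P s)"
    by (metis real_sqrt_le_iff real_sqrt_mult)
  have "?K * S2 \<le> ?K / ?ei * En P s"
  proof -
    have "S2 \<le> En P s / ?ei" using Ee nn ra ei by (simp add: field_simps)
    then have "?K * S2 \<le> ?K * (En P s / ?ei)" by (rule mult_left_mono) (simp add: add_nonneg_nonneg)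
    then show ?thesis by simp
  qed
  then have h2': "sqrt (?K * S2) \<le> sqrt (?K / ?ei) * sqrt (En P s)"
    by (metis real_sqrt_le_iff real_sqrt_mult)
  have "V1 \<le> 1 / ?ra * En P s" using Ee nn ra ei by (simp add: field_simps)
  then have h3: "L2_norm ?l (v1 s) \<le> sqrt (1 / ?ra) * sqrt (En P s)"
    unfolding L2_norm_def V1_def by (metis real_sqrt_le_iff real_sqrt_mult)
  have "V2 \<le> 1 / ?ra * En P s" using Ee nn ra ei by (simp add: field_simps)
  then have h4: "L2_norm ?l (v2 s) \<le> sqrt (1 / ?ra) * sqrt (En P s)"
    unfolding L2_norm_def V2_def by (metis real_sqrt_le_iff real_sqrt_mult)
  show ?thesis unfolding y_out_def using h1 h2 h1' h2' h3 h4 by (simp add: algebra_simps)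
qed

lemma chain_eqf: "sobolev_derivs l k f ds \<Longrightarrow> f = g \<Longrightarrow> sobolev_derivs l k g ds"
  by simp

lemma sd_lin2:
  assumes l: "0 < l" and f: "in_H 2 l f" and g: "in_H 2 l g" and k: "in_H 2 l k"
  shows "in_H 2 l (\<lambda>z. a * (f z - g z) - k z)"
    "negligible {z\<in>{0..l}. sd l 2 (\<lambda>z. a * (f z - g z) - k z) 2 z \<noteq> a * (sd l 2 f 2 z - sd l 2 g 2 z) - sd l 2 k 2 z}"
proof -
  let ?F = "\<lambda>z. a * (f z - g z) - k z"
  note C1 = chain_lin[OF sd_chain[OF f] sd_chain[OF g], of a "-a"]
  note C2 = chain_lin[OF C1 sd_chain[OF k], of 1 "-1"]
  have C3: "sobolev_derivs l 2 ?F (\<lambda>j z. 1 * (a * sd l 2 f j z + - a * sd l 2 g j z) + - 1 * sd l 2 k j z)"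
    by (rule chain_eqf[OF C2]) (rule ext, simp add: algebra_simps)
  then show H: "in_H 2 l ?F" unfolding in_H_def by blast
  have "negligible {z\<in>{0..l}. sd l 2 ?F 2 z \<noteq> 1 * (a * sd l 2 f 2 z + - a * sd l 2 g 2 z) + - 1 * sd l 2 k 2 z}"
    by (rule chain_unique2[OF l sd_chain[OF H] C3])
  then show "negligible {z\<in>{0..l}. sd l 2 ?F 2 z \<noteq> a * (sd l 2 f 2 z - sd l 2 g 2 z) - sd l 2 k 2 z}"
    by (simp add: algebra_simps)
qed

lemma Fop_w: "w1 (Fop P s) = v1 s" "w2 (Fop P s) = v2 s"
  by (simp_all add: Fop_def Let_def)

lemma Fop_v1: "v1 (Fop P s) = (\<lambda>z. - (p_E P * p_I P / (p_rho P * p_A P)) * sd (p_ell P) 4 (w1 s) 4 z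
     + 2 * om3 s * v2 s z + p_nu2 P * (z + p_ell0 P) * gamma2 P s - p_nu3 P * w2 s z * gamma3 P s)"
  by (simp add: Fop_def Let_def)

lemma Fop_v2: "v2 (Fop P s) = (\<lambda>z. - (p_E P * p_I P / (p_rho P * p_A P)) * sd (p_ell P) 4 (w2 s) 4 z
     - 2 * om3 s * v1 s z - p_nu1 P * (z + p_ell0 P) * gamma1 P s + p_nu3 P * w1 s z * gamma3 P s)"
  by (simp add: Fop_def Let_def)

lemma inH2_cont: "in_H 2 l f \<Longrightarrow> continuous_on {0..l} f"
  using chain_cont[OF sd_chain, of 2 l f 0] chain_0[OF sd_chain, of 2 l f] by simp

lemma L2v_Fop:
  assumes D: "in_DF P s"
  shows "L2v (p_ell P) (comps P (Fop P s))"
proof -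
  note DD = inDF_D[OF D]
  note X = inX_D[OF DD(1)]
  let ?l = "p_ell P"
  have a: "L2 ?l (sd ?l 4 (w1 s) 4)" using chain_L2[OF sd_chain[OF DD(2)]] by simp
  have b: "L2 ?l (sd ?l 4 (w2 s) 4)" using chain_L2[OF sd_chain[OF DD(3)]] by simp
  have cw1: "continuous_on {0..?l} (w1 s)" by (rule inH2_cont[OF X(1)])
  have cw2: "continuous_on {0..?l} (w2 s)" by (rule inH2_cont[OF X(2)])
  have t1: "L2 ?l (\<lambda>z. p_nu2 P * (z + p_ell0 P) * gamma2 P s)"
    by (rule L2_cont) (intro continuous_intros)
  have t2: "L2 ?l (\<lambda>z. p_nu3 P * w2 s z * gamma3 P s)"
    by (rule L2_cont) (intro continuous_intros cw2)
  have t3: "L2 ?l (\<lambda>z. p_nu1 P * (z + p_ell0 P) * gamma1 P s)"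
    by (rule L2_cont) (intro continuous_intros)
  have t4: "L2 ?l (\<lambda>z. p_nu3 P * w1 s z * gamma3 P s)"
    by (rule L2_cont) (intro continuous_intros cw1)
  have "L2 ?l (v1 (Fop P s))" unfolding Fop_v1
    by (intro L2_diff[OF L2_add[OF L2_add[OF L2_cmul[OF a] L2_cmul[OF X(4)]] t1] t2])
  moreover have "L2 ?l (v2 (Fop P s))" unfolding Fop_v2
    by (intro L2_add[OF L2_diff[OF L2_diff[OF L2_cmul[OF b] L2_cmul[OF X(3)]] t3] t4])
  moreover have "L2 ?l (sd ?l 2 (v1 s) 2)" using chain_L2[OF sd_chain[OF DD(8)]] by simp
  moreover have "L2 ?l (sd ?l 2 (v2 s) 2)" using chain_L2[OF sd_chain[OF DD(9)]] by simp
  ultimately show ?thesis unfolding L2v_def comps_def Fop_w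
    by (auto simp: less_Suc_eq numeral_eq_Suc)
qed

lemma sol_DF: "is_solution P xi \<Longrightarrow> 0 \<le> t \<Longrightarrow> in_DF P (xi t)"
  by (simp add: is_solution_def)

lemma sol_lim: "is_solution P xi \<Longrightarrow> 0 \<le> t \<Longrightarrow>
  ((\<lambda>s. X_norm P (st_diff (st_scale (1 / (s - t)) (st_diff (xi s) (xi t))) (Fop P (xi t)))) \<longlongrightarrow> 0) (at t within {0..})"
  by (simp add: is_solution_def)

lemma En_deriv:
  assumes pos: "p_rho P > 0" "p_A P > 0" "p_E P > 0" "p_I P > 0" "p_ell P > 0"
    "p_I1 P > 0" "p_I2 P > 0" "p_I3 P > 0" "p_kappa P > 0"
    and sol: "is_solution P xi" and t: "0 \<le> t"
  shows "((\<lambda>s. En P (xi s)) has_real_derivative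
           2 * Bf (p_ell P) (cfP P) (comps P (xi t)) (comps P (Fop P (xi t)))) (at t within {0..})"
proof (rule deriv_abstract[where Bs = "\<lambda>s. comps P (xi s)"])
  let ?l = "p_ell P"
  show "0 \<le> cfP P i" for i by (rule cfP_nonneg[OF pos(1-4)])
  have DFt: "in_DF P (xi t)" by (rule sol_DF[OF sol t])
  show "L2v ?l (comps P (xi t))" by (rule L2v_comps[OF inDF_D(1)[OF DFt]])
  show "L2v ?l (comps P (Fop P (xi t)))" by (rule L2v_Fop[OF DFt])
  show "L2v ?l (comps P (xi s))" if "s \<in> {0..}" for s
    using L2v_comps[OF inDF_D(1)[OF sol_DF[OF sol]]] that by simp
  show "En P (xi s) = Qf ?l (cfP P) (comps P (xi s))" for s by (simp add: En_def)
  show "En P (xi t) = Qf ?l (cfP P) (comps P (xi t))" by (simp add: En_def)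
  define rs where "rs s = st_diff (st_scale (1 / (s - t)) (st_diff (xi s) (xi t))) (Fop P (xi t))" for s
  define R where "R s = (\<lambda>i z. (comps P (xi s) i z - comps P (xi t) i z) / (s - t) - comps P (Fop P (xi t)) i z)" for s
  have key: "Qf ?l (cfP P) (R s) = En P (rs s)" if s: "0 \<le> s" for s
  proof -
    have DFs: "in_DF P (xi s)" by (rule sol_DF[OF sol s])
    note Xs = inX_D[OF inDF_D(1)[OF DFs]] and Xt = inX_D[OF inDF_D(1)[OF DFt]] and Dt = inDF_D[OF DFt]
    have ew1: "w1 (rs s) = (\<lambda>z. (1 / (s - t)) * (w1 (xi s) z - w1 (xi t) z) - v1 (xi t) z)"
      unfolding rs_def by (rule ext) (simp add: st_diff_def st_scale_def Fop_w)
    have ew2: "w2 (rs s) = (\<lambda>z. (1 / (s - t)) * (w2 (xi s) z - w2 (xi t) z) - v2 (xi t) z)"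
      unfolding rs_def by (rule ext) (simp add: st_diff_def st_scale_def Fop_w)
    note N1 = sd_lin2(2)[OF pos(5) Xs(1) Xt(1) Dt(8), of "1 / (s - t)"]
    note N2 = sd_lin2(2)[OF pos(5) Xs(2) Xt(2) Dt(9), of "1 / (s - t)"]
    show ?thesis
      unfolding En_def Qf_def
    proof (rule integral_spike[OF negligible_Un[OF N1 N2]])
      fix z assume z: "z \<in> {0..?l} - ({z\<in>{0..?l}. sd ?l 2 (\<lambda>z. 1 / (s - t) * (w1 (xi s) z - w1 (xi t) z) - v1 (xi t) z) 2 z \<noteq>
            1 / (s - t) * (sd ?l 2 (w1 (xi s)) 2 z - sd ?l 2 (w1 (xi t)) 2 z) - sd ?l 2 (v1 (xi t)) 2 z} \<union>
           {z\<in>{0..?l}. sd ?l 2 (\<lambda>z. 1 / (s - t) * (w2 (xi s) z - w2 (xi t) z) - v2 (xi t) z) 2 z \<noteq>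
            1 / (s - t) * (sd ?l 2 (w2 (xi s)) 2 z - sd ?l 2 (w2 (xi t)) 2 z) - sd ?l 2 (v2 (xi t)) 2 z})"
      have c: "comps P (rs s) i z = R s i z" if "i < 4" for i
      proof -
        have "i = 0 \<or> i = 1 \<or> i = 2 \<or> i = 3" using that by auto
        then show ?thesis
        proof (elim disjE)
          assume "i = 0" then show ?thesis
            unfolding R_def comps_def rs_def by (simp add: st_diff_def st_scale_def divide_inverse algebra_simps)
        next
          assume "i = 1" then show ?thesis
            unfolding R_def comps_def rs_def by (simp add: st_diff_def st_scale_def divide_inverse algebra_simps)
        next
          assume "i = 2" then show ?thesis
            using z unfolding R_def comps_def ew1 by (simp add: Fop_w divide_inverse algebra_simps)
        next
          assume "i = 3" then show ?thesis
            using z unfolding R_def comps_def ew2 by (simp add: Fop_w divide_inverse algebra_simps)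
        qed
      qed
      show "(\<Sum>i<4. cfP P i * (comps P (rs s) i z)\<^sup>2) = (\<Sum>i<4. cfP P i * (R s i z)\<^sup>2)"
        using c by (intro sum.cong) auto
    qed
  qed
  show "((\<lambda>s. Qf ?l (cfP P) (\<lambda>i z. (comps P (xi s) i z - comps P (xi t) i z) / (s - t)
           - comps P (Fop P (xi t)) i z)) \<longlongrightarrow> 0) (at t within {0..})"
  proof (rule Lim_null_comparison)
    have "((\<lambda>s. X_norm P (rs s)) \<longlongrightarrow> 0) (at t within {0..})" unfolding rs_def by (rule sol_lim[OF sol t])
    then have "((\<lambda>s. (X_norm P (rs s))^2) \<longlongrightarrow> 0^2) (at t within {0..})" by (intro tendsto_intros)
    then show "((\<lambda>s. (X_norm P (rs s))^2) \<longlongrightarrow> 0) (at t within {0..})" by simp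
    show "\<forall>\<^sub>F s in at t within {0..}. norm (Qf ?l (cfP P) (\<lambda>i z. (comps P (xi s) i z - comps P (xi t) i z) / (s - t)
           - comps P (Fop P (xi t)) i z)) \<le> (X_norm P (rs s))^2"
      unfolding eventually_at_filter
    proof (intro always_eventually allI impI)
      fix s assume s: "s \<noteq> t" "s \<in> {0..}"
      have L: "L2v ?l (R s)"
        unfolding R_def using L2v_comps[OF inDF_D(1)[OF sol_DF[OF sol]], of s] s
          L2v_comps[OF inDF_D(1)[OF DFt]] L2v_Fop[OF DFt]
        by (intro L2v_diff) (auto simp: L2v_def divide_inverse intro!: L2_cmul[of _ _ "inverse (s - t)", simplified mult.commute] L2_diff)
      have "0 \<le> Qf ?l (cfP P) (R s)" by (rule Qf_nonneg[OF _ L]) (rule cfP_nonneg[OF pos(1-4)])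
      moreover have "Qf ?l (cfP P) (R s) \<le> (X_norm P (rs s))^2"
        using key[of s] s X_norm_En[OF pos(1-4) pos(6-9)] by simp
      ultimately show "norm (Qf ?l (cfP P) (\<lambda>i z. (comps P (xi s) i z - comps P (xi t) i z) / (s - t)
           - comps P (Fop P (xi t)) i z)) \<le> (X_norm P (rs s))^2"
        unfolding R_def by simp
    qed
  qed
qed

lemma Bf_Fop:
  assumes pos: "p_rho P > 0" "p_A P > 0" "p_E P > 0" "p_I P > 0" "p_ell P > 0"
    and D: "in_DF P a"
  shows "Bf (p_ell P) (cfP P) (comps P a) (comps P (Fop P a)) =
     - (p_rho P * p_A P) * (p_nu1 P * (gamma1 P a)^2 + p_nu2 P * (gamma2 P a)^2 + p_nu3 P * (gamma3 P a)^2)"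
proof -
  let ?l = "p_ell P"
  let ?ra = "p_rho P * p_A P" and ?ei = "p_E P * p_I P"
  let ?cc = "p_E P * p_I P / (p_rho P * p_A P)"
  note DD = inDF_D[OF D]
  note X = inX_D[OF DD(1)]
  define g1 where "g1 = gamma1 P a"
  define g2 where "g2 = gamma2 P a"
  define g3 where "g3 = gamma3 P a"
  define o3 where "o3 = om3 a"
  define D1 where "D1 = sd ?l 4 (w1 a) 4"
  define D2 where "D2 = sd ?l 4 (w2 a) 4"
  define T1 where "T1 = sd ?l 4 (w1 a) 2"
  define T2 where "T2 = sd ?l 4 (w2 a) 2"
  define W1 where "W1 = sd ?l 2 (w1 a) 2"
  define W2 where "W2 = sd ?l 2 (w2 a) 2"
  define V1 where "V1 = sd ?l 2 (v1 a) 2"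
  define V2 where "V2 = sd ?l 2 (v2 a) 2"
  have c41: "sobolev_derivs ?l 4 (w1 a) (sd ?l 4 (w1 a))" by (rule sd_chain[OF DD(2)])
  have c42: "sobolev_derivs ?l 4 (w2 a) (sd ?l 4 (w2 a))" by (rule sd_chain[OF DD(3)])
  have cv1: "sobolev_derivs ?l 2 (v1 a) (sd ?l 2 (v1 a))" by (rule sd_chain[OF DD(8)])
  have cv2: "sobolev_derivs ?l 2 (v2 a) (sd ?l 2 (v2 a))" by (rule sd_chain[OF DD(9)])
  have cw1: "sobolev_derivs ?l 2 (w1 a) (sd ?l 2 (w1 a))" by (rule sd_chain[OF X(1)])
  have cw2: "sobolev_derivs ?l 2 (w2 a) (sd ?l 2 (w2 a))" by (rule sd_chain[OF X(2)])
  have N1: "negligible {x\<in>{0..?l}. W1 x \<noteq> T1 x}"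
    unfolding W1_def T1_def by (rule chain_unique2[OF pos(5) cw1 chain_trunc[OF c41]]) simp
  have N2: "negligible {x\<in>{0..?l}. W2 x \<noteq> T2 x}"
    unfolding W2_def T2_def by (rule chain_unique2[OF pos(5) cw2 chain_trunc[OF c42]]) simp
  have I1: "integral {0..?l} (\<lambda>x. T1 x * V1 x) = integral {0..?l} (\<lambda>x. D1 x * v1 a x)"
    unfolding T1_def V1_def D1_def
    using ibp_apply[OF pos(5) c41 cv1 DD(4) DD(5) _ DD(12)] X DD(10) chain_0[OF cv1] by simp
  have I2: "integral {0..?l} (\<lambda>x. T2 x * V2 x) = integral {0..?l} (\<lambda>x. D2 x * v2 a x)"
    unfolding T2_def V2_def D2_def
    using ibp_apply[OF pos(5) c42 cv2 DD(6) DD(7) _ DD(13)] X DD(11) chain_0[OF cv2] by simp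
  have LD1: "L2 ?l D1" unfolding D1_def using chain_L2[OF c41] by simp
  have LD2: "L2 ?l D2" unfolding D2_def using chain_L2[OF c42] by simp
  have LT1: "L2 ?l T1" unfolding T1_def using chain_L2[OF c41] by simp
  have LT2: "L2 ?l T2" unfolding T2_def using chain_L2[OF c42] by simp
  have LV1: "L2 ?l V1" unfolding V1_def using chain_L2[OF cv1] by simp
  have LV2: "L2 ?l V2" unfolding V2_def using chain_L2[OF cv2] by simp
  have Lw1: "L2 ?l (w1 a)" using inH2_cont[OF X(1)] by (rule L2_cont)
  have Lw2: "L2 ?l (w2 a)" using inH2_cont[OF X(2)] by (rule L2_cont)
  have Lz: "L2 ?l (\<lambda>z. z + p_ell0 P)" by (rule L2_cont) (intro continuous_intros)
  define b1 where "b1 z = D1 z * v1 a z" for z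
  define b2 where "b2 z = D2 z * v2 a z" for z
  define b4 where "b4 z = (z + p_ell0 P) * v1 a z" for z
  define b5 where "b5 z = (z + p_ell0 P) * v2 a z" for z
  define b6 where "b6 z = w2 a z * v1 a z - w1 a z * v2 a z" for z
  define b7 where "b7 z = T1 z * V1 z" for z
  define b8 where "b8 z = T2 z * V2 z" for z
  define J1 where "J1 = integral {0..?l} b1"
  define J2 where "J2 = integral {0..?l} b2"
  have h1: "(b1 has_integral J1) {0..?l}" unfolding J1_def b1_def using L2_prod_int[OF LD1 X(3)] by auto
  have h2: "(b2 has_integral J2) {0..?l}" unfolding J2_def b2_def using L2_prod_int[OF LD2 X(4)] by auto
  have h4: "(b4 has_integral (- g2)) {0..?l}"
    unfolding g2_def gamma2_def b4_def using L2_prod_int[OF Lz X(3)] by auto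
  have h5: "(b5 has_integral g1) {0..?l}"
    unfolding g1_def gamma1_def b5_def using L2_prod_int[OF Lz X(4)] by auto
  have h6: "(b6 has_integral g3) {0..?l}"
    unfolding g3_def gamma3_def b6_def using L2_prod_int[OF Lw2 X(3)] L2_prod_int[OF Lw1 X(4)]
    by (auto intro: integrable_diff)
  have h7: "(b7 has_integral J1) {0..?l}"
    using L2_prod_int[OF LT1 LV1] I1 unfolding J1_def b1_def b7_def
    by (metis (no_types, lifting) ext integrable_integral)
  have h8: "(b8 has_integral J2) {0..?l}"
    using L2_prod_int[OF LT2 LV2] I2 unfolding J2_def b2_def b8_def
    by (metis (no_types, lifting) ext integrable_integral)
  define k1 where "k1 = - ?ra * ?cc"
  have k1: "k1 = - ?ei" unfolding k1_def using pos by simp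
  have hall: "((\<lambda>z. k1 * b1 z + k1 * b2 z + (?ra * p_nu2 P * g2) * b4 z + (- ?ra * p_nu1 P * g1) * b5 z
      + (- ?ra * p_nu3 P * g3) * b6 z + ?ei * b7 z + ?ei * b8 z) has_integral
      (k1 * J1 + k1 * J2 + (?ra * p_nu2 P * g2) * (- g2) + (- ?ra * p_nu1 P * g1) * g1
      + (- ?ra * p_nu3 P * g3) * g3 + ?ei * J1 + ?ei * J2)) {0..?l}"
    by (intro has_integral_add has_integral_mult_right h1 h2 h4 h5 h6 h7 h8)
  have "Bf ?l (cfP P) (comps P a) (comps P (Fop P a)) = integral {0..?l}
      (\<lambda>z. k1 * b1 z + k1 * b2 z + (?ra * p_nu2 P * g2) * b4 z + (- ?ra * p_nu1 P * g1) * b5 z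
      + (- ?ra * p_nu3 P * g3) * b6 z + ?ei * b7 z + ?ei * b8 z)"
    unfolding Bf_def
  proof (rule integral_spike[OF negligible_Un[OF N1 N2]])
    fix z assume z: "z \<in> {0..?l} - ({x \<in> {0..?l}. W1 x \<noteq> T1 x} \<union> {x \<in> {0..?l}. W2 x \<noteq> T2 x})"
    then have zz: "W1 z = T1 z" "W2 z = T2 z" by auto
    show "k1 * b1 z + k1 * b2 z + (?ra * p_nu2 P * g2) * b4 z + (- ?ra * p_nu1 P * g1) * b5 z
      + (- ?ra * p_nu3 P * g3) * b6 z + ?ei * b7 z + ?ei * b8 z
      = (\<Sum>i<4. cfP P i * (comps P a i z * comps P (Fop P a) i z))"
      using zz unfolding sum4 cfP_def comps_def Fop_w Fop_v1 Fop_v2 k1_def b1_def b2_def b4_def b5_def b6_def b7_def b8_def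
        g1_def g2_def g3_def D1_def D2_def W1_def W2_def V1_def V2_def
      by (simp add: algebra_simps)
  qed
  also have "\<dots> = k1 * J1 + k1 * J2 + (?ra * p_nu2 P * g2) * (- g2) + (- ?ra * p_nu1 P * g1) * g1
      + (- ?ra * p_nu3 P * g3) * g3 + ?ei * J1 + ?ei * J2"
    using hall by (rule integral_unique)
  also have "\<dots> = - ?ra * (p_nu1 P * g1^2 + p_nu2 P * g2^2 + p_nu3 P * g3^2)"
    unfolding k1 by (simp add: algebra_simps power2_eq_square)
  finally show ?thesis unfolding g1_def g2_def g3_def .
qed

lemma En_mono:
  assumes pos: "p_rho P > 0" "p_A P > 0" "p_E P > 0" "p_I P > 0" "p_ell P > 0"
    "p_I1 P > 0" "p_I2 P > 0" "p_I3 P > 0" "p_kappa P > 0"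
    and nu: "p_nu1 P > 0" "p_nu2 P > 0" "p_nu3 P > 0"
    and sol: "is_solution P xi" and t: "0 \<le> t"
  shows "En P (xi t) \<le> En P (xi 0)"
proof -
  let ?f = "\<lambda>s. En P (xi s)"
  let ?D = "\<lambda>s. 2 * Bf (p_ell P) (cfP P) (comps P (xi s)) (comps P (Fop P (xi s)))"
  have der: "(?f has_real_derivative ?D s) (at s within {0..})" if "0 \<le> s" for s
    by (rule En_deriv[OF pos sol that])
  have Dneg: "?D s \<le> 0" if "0 \<le> s" for s
  proof -
    have "?D s = 2 * (- (p_rho P * p_A P) * (p_nu1 P * (gamma1 P (xi s))^2 + p_nu2 P * (gamma2 P (xi s))^2
        + p_nu3 P * (gamma3 P (xi s))^2))"
      using Bf_Fop[OF pos(1-5) sol_DF[OF sol that]] by simp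
    also have "\<dots> \<le> 0" using pos nu
      by (simp add: mult_nonneg_nonneg add_nonneg_nonneg mult_le_0_iff)
    finally show ?thesis .
  qed
  show ?thesis
  proof (rule DERIV_nonpos_imp_decreasing_open[OF t])
    fix x assume x: "0 < x" "x < t"
    have "interior {0::real..} = {0<..}" using interior_Ici[of "-1::real" 0] by simp
    then have "at x within {0..} = at x" using x by (intro at_within_interior) auto
    then show "\<exists>y. DERIV ?f x :> y \<and> y \<le> 0" using der[of x] Dneg[of x] x by auto
  next
    show "continuous_on {0..t} ?f"
      unfolding continuous_on_eq_continuous_within
    proof
      fix x assume x: "x \<in> {0..t}"
      have "continuous (at x within {0..}) ?f" using DERIV_continuous[OF der[of x]] x by simp
      then show "continuous (at x within {0..t}) ?f" by (rule continuous_within_subset) auto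
    qed
  qed
qed

theorem main:
  fixes P :: params
  assumes "p_rho P > 0" "p_A P > 0" "p_E P > 0" "p_I P > 0" "p_ell P > 0"
    and "p_I1 P > 0" "p_I2 P > 0" "p_I3 P > 0" "p_kappa P > 0"
    and "p_ell0 P \<ge> 0"
    and "p_nu1 P > 0" "p_nu2 P > 0" "p_nu3 P > 0"
    and "well_posed P"
  shows "\<forall>\<epsilon>>0. \<exists>\<delta>>0. \<forall>xi. is_solution P xi \<and> X_norm P (st_diff (xi 0) (xi_hat P)) < \<delta>
           \<longrightarrow> (\<forall>t\<ge>0. y_out P (xi t) < \<epsilon>)"
proof (intro allI impI)
  note pos = assms(1-9)
  fix \<epsilon> :: real assume e: "0 < \<epsilon>"
  define Kc where "Kc = 2 * sqrt ((p_ell P^4 + p_ell P^2 + 1) / (p_E P * p_I P)) + 2 * sqrt (1 / (p_rho P * p_A P))"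
  have Kc0: "0 \<le> Kc" unfolding Kc_def using pos by simp
  define \<delta> where "\<delta> = \<epsilon> / (Kc + 1)"
  have d0: "0 < \<delta>" unfolding \<delta>_def using e Kc0 by simp
  show "\<exists>\<delta>>0. \<forall>xi. is_solution P xi \<and> X_norm P (st_diff (xi 0) (xi_hat P)) < \<delta>
           \<longrightarrow> (\<forall>t\<ge>0. y_out P (xi t) < \<epsilon>)"
  proof (intro exI[of _ \<delta>] conjI allI impI d0)
    fix xi and t :: real assume H: "is_solution P xi \<and> X_norm P (st_diff (xi 0) (xi_hat P)) < \<delta>" and t: "0 \<le> t"
    have sol: "is_solution P xi" using H by simp
    have cm: "comps P (st_diff (xi 0) (xi_hat P)) = comps P (xi 0)"
      by (simp add: fun_eq_iff comps_def st_diff_def xi_hat_def)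
    have "sqrt (En P (xi 0)) \<le> X_norm P (st_diff (xi 0) (xi_hat P))"
      using X_norm_En(2)[OF pos(1-4) pos(6-9), of "st_diff (xi 0) (xi_hat P)"] cm by (simp add: En_def)
    then have E0: "sqrt (En P (xi 0)) < \<delta>" using H by simp
    have "y_out P (xi t) \<le> Kc * sqrt (En P (xi t))"
      unfolding Kc_def by (rule y_bound[OF pos(1-5) inDF_D(1)[OF sol_DF[OF sol t]]])
    also have "\<dots> \<le> Kc * sqrt (En P (xi 0))"
      using En_mono[OF pos assms(11-13) sol t] Kc0 by (intro mult_left_mono) auto
    also have "\<dots> \<le> Kc * \<delta>" using E0 Kc0 by (intro mult_left_mono) auto
    also have "\<dots> < \<epsilon>" unfolding \<delta>_def using e Kc0 by (simp add: field_simps)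
    finally show "y_out P (xi t) < \<epsilon>" .
  qed
qed

theorem theorem1:
  fixes P :: params
  assumes "p_rho P > 0" "p_A P > 0" "p_E P > 0" "p_I P > 0" "p_ell P > 0"
    and "p_I1 P > 0" "p_I2 P > 0" "p_I3 P > 0" "p_kappa P > 0"
    and "p_ell0 P \<ge> 0"
    and "p_nu1 P > 0" "p_nu2 P > 0" "p_nu3 P > 0"
    and "well_posed P"
  shows "\<forall>\<epsilon>>0. \<exists>\<delta>>0. \<forall>xi. is_solution P xi \<and> X_norm P (st_diff (xi 0) (xi_hat P)) < \<delta>
           \<longrightarrow> (\<forall>t\<ge>0. y_out P (xi t) < \<epsilon>)"
    using main[OF assms] .

end
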